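(* Let $H:\mathbb{R}^4\to\mathbb{R}$ be $C^\infty$ with $H(0)=0$, $dH(0)=0$ and the origin a non-degenerate critical point; suppose the linearization $L$ of $\xi_H$ at the origin has eigenvalues $a,b,-a,-b$ ($a,b>0$) with eigenvectors $e_1,e_2,e_3,e_4$, that $a,b$ are linearly independent over $\mathbb{Q}$, and that each of $\{\pi_*e_1,\pi_*e_2\}$, $\{\pi_*e_3,\pi_*e_4\}$, $\{\pi_*e_1,\pi_*e_4\}$, $\{\pi_*e_2,\pi_*e_3\}$ is linearly independent. Let $z$ be a solution of $H(x,y,z_x,z_y)=0$ with $z(0,0)=z_x(0,0)=z_y(0,0)=0$ whose jet near the origin is either the stable or the unstable submanifold of $\xi_H$ at the origin. If $\tilde z$ is any $C^2$ solution with $\tilde z(0,0)=\tilde z_x(0,0)=\tilde z_y(0,0)=0$ whose jet is tangent to the jet of $z$ at the origin (equivalently $\tilde z_{xx},\tilde z_{xy},\tilde z_{yy}$ agree with $z_{xx},z_{xy},z_{yy}$ at $(0,0)$), then $\tilde z=z$ in a neighborhood of the origin.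
   Context: Coordinates $(x,y,p,q)$ on $\mathbb{R}^4$, $\pi(x,y,p,q)=(x,y)$. The characteristic vector field is $\xi_H=H_p\partial_x+H_q\partial_y-H_x\partial_p-H_y\partial_q$, with flow $\Phi_t$, and $L$ is its linearization at the origin. The stable (resp. unstable) submanifold at the origin is the set of points $P$ in a small neighborhood of the origin with $\Phi_t(P)\to0$ as $t\to+\infty$ (resp. $t\to-\infty$). The jet of $z$ is $\{(x,y,z_x,z_y)\}$. *)

theory Defs
  imports "HOL-Analysis.Analysis"
begin

type_synonym R4 = "real \<times> real \<times> real \<times> real"   (* points (x,y,p,q) *)
type_synonym R2 = "real \<times> real"

fun Ck_on :: "nat \<Rightarrow> 'a::euclidean_space set \<Rightarrow> ('a \<Rightarrow> real) \<Rightarrow> bool" where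
  "Ck_on 0 S f = continuous_on S f"
| "Ck_on (Suc k) S f =
     (f differentiable_on S \<and> (\<forall>i\<in>Basis. Ck_on k S (\<lambda>x. frechet_derivative f (at x) i)))"

definition smooth_on :: "'a::euclidean_space set \<Rightarrow> ('a \<Rightarrow> real) \<Rightarrow> bool" where
  "smooth_on S f \<longleftrightarrow> (\<forall>k. Ck_on k S f)"

definition pd :: "('a::real_normed_vector \<Rightarrow> real) \<Rightarrow> 'a \<Rightarrow> 'a \<Rightarrow> real" where
  "pd f v P = frechet_derivative f (at P) v"

definition pd2 :: "('a::real_normed_vector \<Rightarrow> real) \<Rightarrow> 'a \<Rightarrow> 'a \<Rightarrow> 'a \<Rightarrow> real" where
  "pd2 f u v P = frechet_derivative (\<lambda>Q. frechet_derivative f (at Q) v) (at P) u"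

definition ex4 :: R4 where "ex4 = (1,0,0,0)"
definition ey4 :: R4 where "ey4 = (0,1,0,0)"
definition ep4 :: R4 where "ep4 = (0,0,1,0)"
definition eq4 :: R4 where "eq4 = (0,0,0,1)"
definition ex2 :: R2 where "ex2 = (1,0)"
definition ey2 :: R2 where "ey2 = (0,1)"

text \<open>Projection pi(x,y,p,q) = (x,y); it is linear, so pi_* = pi.\<close>
definition proj :: "R4 \<Rightarrow> R2" where
  "proj P = (fst P, fst (snd P))"

definition xiH :: "(R4 \<Rightarrow> real) \<Rightarrow> R4 \<Rightarrow> R4" where
  "xiH H P = (pd H ep4 P, pd H eq4 P, - pd H ex4 P, - pd H ey4 P)"

definition nondeg_critical_0 :: "(R4 \<Rightarrow> real) \<Rightarrow> bool" where
  "nondeg_critical_0 H \<longleftrightarrow>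
     (\<forall>v. pd H v 0 = 0) \<and> (\<forall>u. (\<forall>v. pd2 H u v 0 = 0) \<longrightarrow> u = 0)"

definition lin_indep2 :: "R2 \<Rightarrow> R2 \<Rightarrow> bool" where
  "lin_indep2 u v \<longleftrightarrow> (\<forall>c d::real. c *\<^sub>R u + d *\<^sub>R v = 0 \<longrightarrow> c = 0 \<and> d = 0)"

definition Q_indep :: "real \<Rightarrow> real \<Rightarrow> bool" where
  "Q_indep a b \<longleftrightarrow> (\<forall>r s. r \<in> \<rat> \<and> s \<in> \<rat> \<and> r * a + s * b = 0 \<longrightarrow> r = 0 \<and> s = 0)"

definition stable_loc :: "(R4 \<Rightarrow> real) \<Rightarrow> R4 set \<Rightarrow> R4 set" where
  "stable_loc H N = {P \<in> N. \<exists>\<gamma>::real \<Rightarrow> R4. \<gamma> 0 = P \<and>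
      (\<forall>t\<ge>0. (\<gamma> has_vector_derivative xiH H (\<gamma> t)) (at t within {0..}) \<and> \<gamma> t \<in> N) \<and>
      (\<gamma> \<longlongrightarrow> 0) at_top}"

definition unstable_loc :: "(R4 \<Rightarrow> real) \<Rightarrow> R4 set \<Rightarrow> R4 set" where
  "unstable_loc H N = {P \<in> N. \<exists>\<gamma>::real \<Rightarrow> R4. \<gamma> 0 = P \<and>
      (\<forall>t\<le>0. (\<gamma> has_vector_derivative xiH H (\<gamma> t)) (at t within {..0}) \<and> \<gamma> t \<in> N) \<and>
      (\<gamma> \<longlongrightarrow> 0) at_bot}"

definition jet :: "(R2 \<Rightarrow> real) \<Rightarrow> R2 \<Rightarrow> R4" where
  "jet z w = (fst w, snd w, pd z ex2 w, pd z ey2 w)"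

definition solves_HJ :: "(R4 \<Rightarrow> real) \<Rightarrow> R2 set \<Rightarrow> (R2 \<Rightarrow> real) \<Rightarrow> bool" where
  "solves_HJ H U z \<longleftrightarrow> (\<forall>w\<in>U. H (jet z w) = 0)"

end

theory Submission
  imports Defs
begin

lemma deriv_along_x:
  fixes f :: "R2 \<Rightarrow> real"
  assumes "f differentiable (at (t,c))"
  shows "((\<lambda>s. f (s,c)) has_real_derivative frechet_derivative f (at (t,c)) (1,0)) (at t)"
proof -
  let ?D = "frechet_derivative f (at (t,c))"
  have d: "(f has_derivative ?D) (at (t,c))" using assms frechet_derivative_works by blast
  have l: "linear ?D" using d has_derivative_linear by blast
  have p: "((\<lambda>s. (s,c)) has_derivative (\<lambda>s. (s,0))) (at t)"
    by (auto intro!: derivative_eq_intros)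
  have "((\<lambda>s. f (s,c)) has_derivative (\<lambda>s. ?D (s,0))) (at t)"
    using has_derivative_compose[OF p, of f ?D] d by simp
  moreover have "(\<lambda>s. ?D (s,0)) = (\<lambda>s. s * ?D (1,0))"
  proof
    fix s :: real
    have "(s,0::real) = s *\<^sub>R (1,0)" by simp
    then show "?D (s,0) = s * ?D (1,0)" using linear_scale[OF l] by (metis real_scaleR_def)
  qed
  ultimately show ?thesis unfolding has_field_derivative_def by (simp add: mult.commute[of _ "frechet_derivative f _ _"])
qed

lemma deriv_along_y:
  fixes f :: "R2 \<Rightarrow> real"
  assumes "f differentiable (at (c,t))"
  shows "((\<lambda>s. f (c,s)) has_real_derivative frechet_derivative f (at (c,t)) (0,1)) (at t)"
proof -
  let ?D = "frechet_derivative f (at (c,t))"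
  have d: "(f has_derivative ?D) (at (c,t))" using assms frechet_derivative_works by blast
  have l: "linear ?D" using d has_derivative_linear by blast
  have p: "((\<lambda>s. (c,s)) has_derivative (\<lambda>s. (0,s))) (at t)"
    by (auto intro!: derivative_eq_intros)
  have "((\<lambda>s. f (c,s)) has_derivative (\<lambda>s. ?D (0,s))) (at t)"
    using has_derivative_compose[OF p, of f ?D] d by simp
  moreover have "(\<lambda>s. ?D (0,s)) = (\<lambda>s. s * ?D (0,1))"
  proof
    fix s :: real
    have "(0,s::real) = s *\<^sub>R (0,1)" by simp
    then show "?D (0,s) = s * ?D (0,1)" using linear_scale[OF l] by (metis real_scaleR_def)
  qed
  ultimately show ?thesis unfolding has_field_derivative_def by (simp add: mult.commute[of _ "frechet_derivative f _ _"])
qed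

lemma young_schwarz:
  fixes f :: "R2 \<Rightarrow> real"
  assumes U: "open U" "0 \<in> U" and df: "\<And>w. w\<in>U \<Longrightarrow> f differentiable (at w)"
   and dfx: "(\<lambda>w. frechet_derivative f (at w) (1,0)) differentiable (at 0)"
   and dfy: "(\<lambda>w. frechet_derivative f (at w) (0,1)) differentiable (at 0)"
  shows "frechet_derivative (\<lambda>w. frechet_derivative f (at w) (1,0)) (at 0) (0,1)
       = frechet_derivative (\<lambda>w. frechet_derivative f (at w) (0,1)) (at 0) (1,0)"
proof -
  define fx where "fx w = frechet_derivative f (at w) (1,0)" for w
  define fy where "fy w = frechet_derivative f (at w) (0,1)" for w
  define Dx where "Dx = frechet_derivative fx (at 0)"
  define Dy where "Dy = frechet_derivative fy (at 0)"
  have fxe: "fx = (\<lambda>w. frechet_derivative f (at w) (1,0))" by (simp add: fx_def[abs_def])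
  have fye: "fy = (\<lambda>w. frechet_derivative f (at w) (0,1))" by (simp add: fy_def[abs_def])
  have hx: "(fx has_derivative Dx) (at 0)" unfolding Dx_def fxe using dfx frechet_derivative_works by blast
  have hy: "(fy has_derivative Dy) (at 0)" unfolding Dy_def fye using dfy frechet_derivative_works by blast
  have lx: "linear Dx" using hx has_derivative_linear by blast
  have ly: "linear Dy" using hy has_derivative_linear by blast
  define c1 where "c1 = Dx (0,1)"
  define c2 where "c2 = Dy (1,0)"
  have key: "\<bar>c1 - c2\<bar> \<le> 8*e" if e: "e>0" for e
  proof -
    obtain d1 where d1: "d1>0" "\<And>y. norm y < d1 \<Longrightarrow> \<bar>fx y - fx 0 - Dx y\<bar> \<le> e * norm y"
      using hx e unfolding has_derivative_at_alt by (auto simp del: real_norm_def simp: real_norm_def[symmetric])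
    obtain d2 where d2: "d2>0" "\<And>y. norm y < d2 \<Longrightarrow> \<bar>fy y - fy 0 - Dy y\<bar> \<le> e * norm y"
      using hy e unfolding has_derivative_at_alt by (auto simp del: real_norm_def simp: real_norm_def[symmetric])
    obtain d0 where d0: "d0>0" "ball 0 d0 \<subseteq> U" using U open_contains_ball by blast
    define h where "h = min d0 (min d1 d2) / 4"
    have h: "h>0" "2*h < d0" "2*h < d1" "2*h < d2" using d0 d1 d2 by (auto simp: h_def)
    have nrm: "norm (a,b) \<le> 2*h" if "\<bar>a\<bar> \<le> h" "\<bar>b\<bar> \<le> h" for a b :: real
      using norm_Pair_le[of a b] that by simp
    have inU: "(a,b) \<in> U" if "\<bar>a\<bar> \<le> h" "\<bar>b\<bar> \<le> h" for a b :: real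
    proof -
      have "(a,b) \<in> ball 0 d0" using nrm[OF that] h unfolding mem_ball dist_0_norm by linarith
      then show ?thesis using d0 by blast
    qed
    define \<Delta> where "\<Delta> = f(h,h) - f(h,0) - f(0,h) + f(0,0)"
    obtain \<theta> where th: "0<\<theta>" "\<theta><h" "\<Delta> = (h - 0) * (fx(\<theta>,h) - fx(\<theta>,0))"
    proof -
      have "\<exists>z. 0 < z \<and> z < h \<and> (\<lambda>t. f(t,h) - f(t,0)) h - (\<lambda>t. f(t,h) - f(t,0)) 0 = (h - 0) * (fx(z,h) - fx(z,0))"
      proof (rule MVT2)
        show "0 < h" using h by simp
        fix t :: real assume "0 \<le> t" "t \<le> h"
        then have "(t,h) \<in> U" "(t,0) \<in> U" using inU h by auto
        then show "((\<lambda>t. f(t,h) - f(t,0)) has_real_derivative fx(t,h) - fx(t,0)) (at t)"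
          unfolding fx_def by (intro DERIV_diff deriv_along_x df)
      qed
      then show ?thesis using that unfolding \<Delta>_def by auto
    qed
    obtain \<eta> where et: "0<\<eta>" "\<eta><h" "\<Delta> = (h - 0) * (fy(h,\<eta>) - fy(0,\<eta>))"
    proof -
      have "\<exists>z. 0 < z \<and> z < h \<and> (\<lambda>t. f(h,t) - f(0,t)) h - (\<lambda>t. f(h,t) - f(0,t)) 0 = (h - 0) * (fy(h,z) - fy(0,z))"
      proof (rule MVT2)
        show "0 < h" using h by simp
        fix t :: real assume "0 \<le> t" "t \<le> h"
        then have "(h,t) \<in> U" "(0,t) \<in> U" using inU h by auto
        then show "((\<lambda>t. f(h,t) - f(0,t)) has_real_derivative fy(h,t) - fy(0,t)) (at t)"
          unfolding fy_def by (intro DERIV_diff deriv_along_y df)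
      qed
      then show ?thesis using that unfolding \<Delta>_def by (auto simp: algebra_simps)
    qed
    have Dxs: "Dx (\<theta>,h) - Dx (\<theta>,0) = h * c1"
    proof -
      have "Dx (\<theta>,h) - Dx (\<theta>,0) = Dx ((\<theta>,h) - (\<theta>,0))" using linear_diff[OF lx] by metis
      also have "(\<theta>,h) - (\<theta>,0) = h *\<^sub>R (0,1::real)" by simp
      finally show ?thesis using linear_scale[OF lx, of h "(0,1)"] by (simp add: c1_def)
    qed
    have Dys: "Dy (h,\<eta>) - Dy (0,\<eta>) = h * c2"
    proof -
      have "Dy (h,\<eta>) - Dy (0,\<eta>) = Dy ((h,\<eta>) - (0,\<eta>))" using linear_diff[OF ly] by metis
      also have "(h,\<eta>) - (0,\<eta>) = h *\<^sub>R (1::real,0::real)" by simp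
      finally show ?thesis using linear_scale[OF ly, of h "(1,0)"] by (simp add: c2_def)
    qed
    have a1: "\<bar>fx (\<theta>,h) - fx 0 - Dx (\<theta>,h)\<bar> \<le> e * (2*h)"
    proof -
      have n: "norm (\<theta>,h) \<le> 2*h" using nrm th h by simp
      have "\<bar>fx (\<theta>,h) - fx 0 - Dx (\<theta>,h)\<bar> \<le> e * norm (\<theta>,h)" using d1(2)[of "(\<theta>,h)"] n h by simp
      also have "\<dots> \<le> e * (2*h)" using n e by (intro mult_left_mono) auto
      finally show ?thesis .
    qed
    have a2: "\<bar>fx (\<theta>,0) - fx 0 - Dx (\<theta>,0)\<bar> \<le> e * (2*h)"
    proof -
      have n: "norm (\<theta>,0::real) \<le> 2*h" using nrm th h by simp
      have "\<bar>fx (\<theta>,0) - fx 0 - Dx (\<theta>,0)\<bar> \<le> e * norm (\<theta>,0::real)" using d1(2)[of "(\<theta>,0::real)"] n h by simp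
      also have "\<dots> \<le> e * (2*h)" using n e by (intro mult_left_mono) auto
      finally show ?thesis .
    qed
    have b1: "\<bar>fy (h,\<eta>) - fy 0 - Dy (h,\<eta>)\<bar> \<le> e * (2*h)"
    proof -
      have n: "norm (h,\<eta>) \<le> 2*h" using nrm et h by simp
      have "\<bar>fy (h,\<eta>) - fy 0 - Dy (h,\<eta>)\<bar> \<le> e * norm (h,\<eta>)" using d2(2)[of "(h,\<eta>)"] n h by simp
      also have "\<dots> \<le> e * (2*h)" using n e by (intro mult_left_mono) auto
      finally show ?thesis .
    qed
    have b2: "\<bar>fy (0,\<eta>) - fy 0 - Dy (0,\<eta>)\<bar> \<le> e * (2*h)"
    proof -
      have n: "norm (0::real,\<eta>) \<le> 2*h" using nrm et h by simp
      have "\<bar>fy (0,\<eta>) - fy 0 - Dy (0,\<eta>)\<bar> \<le> e * norm (0::real,\<eta>)" using d2(2)[of "(0::real,\<eta>)"] n h by simp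
      also have "\<dots> \<le> e * (2*h)" using n e by (intro mult_left_mono) auto
      finally show ?thesis .
    qed
    have "\<bar>(fx(\<theta>,h) - fx(\<theta>,0)) - (fy(h,\<eta>) - fy(0,\<eta>)) - h*(c1 - c2)\<bar> \<le> e*(8*h)"
    proof -
      have "h*(c1-c2) = h*c1 - h*c2" "e*(8*h) = 4*(e*(2*h))" by (simp_all add: algebra_simps)
      then show ?thesis using a1 a2 b1 b2 Dxs Dys unfolding abs_le_iff by linarith
    qed
    moreover have "fx(\<theta>,h) - fx(\<theta>,0) = fy(h,\<eta>) - fy(0,\<eta>)" using th(3) et(3) h by simp
    ultimately have "\<bar>h*(c1 - c2)\<bar> \<le> h * (8*e)" by (simp add: algebra_simps)
    then have "h * \<bar>c1 - c2\<bar> \<le> h * (8*e)" using h by (simp add: abs_mult)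
    then have "\<bar>c1 - c2\<bar> \<le> 8*e" using h by simp
    then show ?thesis .
  qed
  have "c1 = c2"
  proof (rule ccontr)
    assume "c1 \<noteq> c2"
    then have "\<bar>c1 - c2\<bar> \<le> 8*(\<bar>c1-c2\<bar>/16)" using key[of "\<bar>c1-c2\<bar>/16"] by simp
    with \<open>c1 \<noteq> c2\<close> show False by simp
  qed
  then show ?thesis unfolding c1_def c2_def Dx_def Dy_def fx_def fy_def .
qed

lemma local_linearization:
  fixes f :: "'a::euclidean_space \<Rightarrow> 'b::real_normed_vector"
  assumes S: "open S" "x0 \<in> S" and df: "\<And>x. x \<in> S \<Longrightarrow> f differentiable (at x)"
    and cont: "\<And>i. i \<in> Basis \<Longrightarrow> isCont (\<lambda>x. frechet_derivative f (at x) i) x0"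
    and e: "e > 0"
  shows "\<exists>d>0. ball x0 d \<subseteq> S \<and> (\<forall>x\<in>ball x0 d. \<forall>y\<in>ball x0 d.
           norm (f x - f y - frechet_derivative f (at x0) (x - y)) \<le> e * norm (x - y))"
proof -
  define e' where "e' = e / real (card (Basis::'a set))"
  have e': "e' > 0" using e by (simp add: e'_def)
  have "\<forall>i\<in>Basis. eventually (\<lambda>x. dist (frechet_derivative f (at x) i) (frechet_derivative f (at x0) i) < e') (nhds x0)"
  proof
    fix i :: 'a assume i: "i \<in> Basis"
    have "((\<lambda>x. frechet_derivative f (at x) i) \<longlongrightarrow> frechet_derivative f (at x0) i) (nhds x0)"
      using cont[OF i] tendsto_at_iff_tendsto_nhds isCont_def by blast
    then show "eventually (\<lambda>x. dist (frechet_derivative f (at x) i) (frechet_derivative f (at x0) i) < e') (nhds x0)"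
      using e' tendsto_iff[THEN iffD1, rule_format] by blast
  qed
  then have ev: "eventually (\<lambda>x. \<forall>i\<in>Basis. dist (frechet_derivative f (at x) i) (frechet_derivative f (at x0) i) < e') (nhds x0)"
    by (intro eventually_ball_finite) auto
  moreover have "eventually (\<lambda>x. x \<in> S) (nhds x0)" using S eventually_nhds_in_open by blast
  ultimately have "eventually (\<lambda>x. x \<in> S \<and> (\<forall>i\<in>Basis. dist (frechet_derivative f (at x) i) (frechet_derivative f (at x0) i) < e')) (nhds x0)"
    by (simp add: eventually_conj_iff)
  then obtain d where d: "d > 0" "\<And>x. dist x x0 < d \<Longrightarrow> x \<in> S \<and> (\<forall>i\<in>Basis. dist (frechet_derivative f (at x) i) (frechet_derivative f (at x0) i) < e')"
    unfolding eventually_nhds_metric by blast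
  have sub: "ball x0 d \<subseteq> S" using d by (auto simp: dist_commute)
  have hd: "(f has_derivative frechet_derivative f (at x)) (at x within ball x0 d)" if "x \<in> ball x0 d" for x
    using df sub that frechet_derivative_works has_derivative_at_withinI by blast
  have bl: "bounded_linear (frechet_derivative f (at x))" if "x \<in> S" for x
    using df that frechet_derivative_works has_derivative_bounded_linear by blast
  have on: "onorm (\<lambda>v. frechet_derivative f (at x) v - frechet_derivative f (at x0) v) \<le> e" if x: "x \<in> ball x0 d" for x
  proof -
    have xS: "x \<in> S" using x sub by blast
    have "bounded_linear (\<lambda>v. frechet_derivative f (at x) v - frechet_derivative f (at x0) v)"
      using bl[OF xS] bl[OF S(2)] by (rule bounded_linear_sub)
    then have "onorm (\<lambda>v. frechet_derivative f (at x) v - frechet_derivative f (at x0) v)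
       \<le> (\<Sum>i\<in>Basis. norm (frechet_derivative f (at x) i - frechet_derivative f (at x0) i))"
      by (rule onorm_componentwise)
    also have "\<dots> \<le> (\<Sum>i\<in>(Basis::'a set). e')"
    proof (intro sum_mono)
      fix i :: 'a assume i: "i \<in> Basis"
      have "dist x x0 < d" using x by (simp add: dist_commute)
      then have "dist (frechet_derivative f (at x) i) (frechet_derivative f (at x0) i) < e'" using d(2) i by blast
      then show "norm (frechet_derivative f (at x) i - frechet_derivative f (at x0) i) \<le> e'" by (simp add: dist_norm)
    qed
    also have "\<dots> = e" by (simp add: e'_def)
    finally show ?thesis .
  qed
  have "norm (f x - f y - frechet_derivative f (at x0) (x - y)) \<le> e * norm (x - y)"
    if "x \<in> ball x0 d" "y \<in> ball x0 d" for x y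
  proof -
    have "norm (f x - f y - frechet_derivative f (at x0) (x - y)) \<le> norm (x - y) * e"
    proof (rule differentiable_bound_linearization[where S="ball x0 d" and f'="\<lambda>x. frechet_derivative f (at x)"])
      show "y + t *\<^sub>R (x - y) \<in> ball x0 d" if t: "t \<in> {0..1}" for t
      proof -
        have "y + t *\<^sub>R (x - y) = (1 - t) *\<^sub>R y + t *\<^sub>R x" by (simp add: algebra_simps)
        moreover have "(1 - t) *\<^sub>R y + t *\<^sub>R x \<in> ball x0 d"
          using t \<open>x \<in> ball x0 d\<close> \<open>y \<in> ball x0 d\<close> by (intro convexD[OF convex_ball]) auto
        ultimately show ?thesis by simp
      qed
      show "\<And>x. x \<in> ball x0 d \<Longrightarrow> (f has_derivative frechet_derivative f (at x)) (at x within ball x0 d)" by (rule hd)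
      show "\<And>x. x \<in> ball x0 d \<Longrightarrow> onorm (frechet_derivative f (at x) - frechet_derivative f (at x0)) \<le> e"
        using on by (simp add: fun_diff_def)
      show "x0 \<in> ball x0 d" using d by simp
    qed
    then show ?thesis by (simp add: mult.commute)
  qed
  then show ?thesis using d sub by blast
qed

lemma lipschitz_on_cball:
  fixes f :: "'a::euclidean_space \<Rightarrow> 'b::real_normed_vector"
  assumes S: "open S" "cball c R \<subseteq> S" and df: "\<And>x. x \<in> S \<Longrightarrow> f differentiable (at x)"
    and cont: "\<And>i. i \<in> Basis \<Longrightarrow> continuous_on S (\<lambda>x. frechet_derivative f (at x) i)"
  shows "\<exists>B. \<forall>x\<in>cball c R. \<forall>y\<in>cball c R. norm (f x - f y) \<le> B * norm (x - y)"
proof -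
  have "\<forall>i\<in>Basis. \<exists>b. \<forall>x\<in>cball c R. norm (frechet_derivative f (at x) i) \<le> b"
  proof
    fix i :: 'a assume i: "i \<in> Basis"
    have "compact ((\<lambda>x. frechet_derivative f (at x) i) ` cball c R)"
      using cont[OF i] S by (intro compact_continuous_image) (auto intro: continuous_on_subset)
    then show "\<exists>b. \<forall>x\<in>cball c R. norm (frechet_derivative f (at x) i) \<le> b"
    proof -
      from \<open>compact _\<close> have "bounded ((\<lambda>x. frechet_derivative f (at x) i) ` cball c R)" by (rule compact_imp_bounded)
      then obtain a where "\<forall>y\<in>(\<lambda>x. frechet_derivative f (at x) i) ` cball c R. norm y \<le> a" unfolding bounded_iff by blast
      then show ?thesis by blast
    qed
  qed
  then obtain b where b: "\<And>i x. i \<in> Basis \<Longrightarrow> x \<in> cball c R \<Longrightarrow> norm (frechet_derivative f (at x) i) \<le> b i"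
    by metis
  have "norm (f x - f y) \<le> (\<Sum>i\<in>Basis. b i) * norm (x - y)" if "x\<in>cball c R" "y\<in>cball c R" for x y
  proof (rule differentiable_bound[where S="cball c R" and f'="\<lambda>x. frechet_derivative f (at x)"])
    show "convex (cball c R)" by simp
    show "\<And>x. x \<in> cball c R \<Longrightarrow> (f has_derivative frechet_derivative f (at x)) (at x within cball c R)"
      using df S frechet_derivative_works has_derivative_at_withinI by blast
    show "\<And>x. x \<in> cball c R \<Longrightarrow> onorm (frechet_derivative f (at x)) \<le> (\<Sum>i\<in>Basis. b i)"
    proof -
      fix x assume x: "x \<in> cball c R"
      have "bounded_linear (frechet_derivative f (at x))"
        using df S x frechet_derivative_works has_derivative_bounded_linear by blast
      then have "onorm (frechet_derivative f (at x)) \<le> (\<Sum>i\<in>Basis. norm (frechet_derivative f (at x) i))"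
        by (rule onorm_componentwise)
      also have "\<dots> \<le> (\<Sum>i\<in>Basis. b i)" using b x by (intro sum_mono) auto
      finally show "onorm (frechet_derivative f (at x)) \<le> (\<Sum>i\<in>Basis. b i)" .
    qed
  qed (use that in auto)
  then show ?thesis by blast
qed

lemma Basis_R2: "(Basis :: R2 set) = {ex2, ey2}"
  by (simp add: Basis_prod_def ex2_def ey2_def insert_commute)

lemma Basis_R4: "(Basis :: R4 set) = {ex4, ey4, ep4, eq4}"
  by (simp add: Basis_prod_def ex4_def ey4_def ep4_def eq4_def zero_prod_def image_Un insert_commute)

lemma Ck2_unfold:
  "Ck_on 2 S f \<longleftrightarrow> f differentiable_on S \<and> (\<forall>i\<in>Basis. (\<lambda>x. frechet_derivative f (at x) i) differentiable_on S \<and>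
     (\<forall>j\<in>Basis. continuous_on S (\<lambda>x. frechet_derivative (\<lambda>x. frechet_derivative f (at x) i) (at x) j)))"
  by (simp add: numeral_2_eq_2)

lemma lin2: "linear f \<Longrightarrow> f (a, b) = a * f ex2 + b * f ey2" for f :: "R2 \<Rightarrow> real"
proof -
  assume l: "linear f"
  have "(a,b) = a *\<^sub>R ex2 + b *\<^sub>R ey2" by (simp add: ex2_def ey2_def)
  then show ?thesis using linear_add[OF l] linear_scale[OF l] by (metis real_scaleR_def)
qed

lemma lin2v: "linear f \<Longrightarrow> f (a, b) = a *\<^sub>R f ex2 + b *\<^sub>R f ey2"
proof -
  assume l: "linear f"
  have "(a,b) = a *\<^sub>R ex2 + b *\<^sub>R ey2" by (simp add: ex2_def ey2_def)
  then show ?thesis using linear_add[OF l] linear_scale[OF l] by metis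
qed

lemma lin4: "linear f \<Longrightarrow> f (a, b, c, d) = a * f ex4 + b * f ey4 + c * f ep4 + d * f eq4" for f :: "R4 \<Rightarrow> real"
proof -
  assume l: "linear f"
  have "(a,b,c,d) = a *\<^sub>R ex4 + b *\<^sub>R ey4 + c *\<^sub>R ep4 + d *\<^sub>R eq4" by (simp add: ex4_def ey4_def ep4_def eq4_def)
  then show ?thesis using linear_add[OF l] linear_scale[OF l] by (metis real_scaleR_def)
qed

lemma has_derivative_cont_mult_zero:
  fixes g :: "'a::real_normed_vector \<Rightarrow> real"
  assumes g: "(g has_derivative g') (at x)" and g0: "g x = 0" and c: "isCont c x"
  shows "((\<lambda>w. c w * g w) has_derivative (\<lambda>v. c x * g' v)) (at x)"
proof -
  have bl: "bounded_linear g'" using g has_derivative_bounded_linear by blast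
  obtain B where B: "B > 0" "\<And>v. norm (g' v) \<le> norm v * B"
    using bounded_linear.pos_bounded[OF bl] by blast
  have "((\<lambda>w. (c w - c x) * g w) has_derivative (\<lambda>v. 0)) (at x)"
    unfolding has_derivative_at_alt
  proof (intro conjI allI impI)
    show "bounded_linear (\<lambda>v. 0::real)" by (rule bounded_linear_zero)
    fix e :: real assume e: "e > 0"
    obtain d1 where d1: "d1 > 0" "\<And>y. norm (y - x) < d1 \<Longrightarrow> norm (g y - g x - g' (y - x)) \<le> 1 * norm (y - x)"
    proof -
      from g[unfolded has_derivative_at_alt] have "\<forall>e>0. \<exists>d>0. \<forall>y. norm (y - x) < d \<longrightarrow> norm (g y - g x - g' (y - x)) \<le> e * norm (y - x)" by blast
      from this[rule_format, of 1] show ?thesis using that by auto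
    qed
    obtain d2 where d2: "d2 > 0" "\<And>y. dist y x < d2 \<Longrightarrow> dist (c y) (c x) < e / (B + 1)"
    proof -
      have "e / (B + 1) > 0" using e B by simp
      from c[unfolded continuous_at_eps_delta, rule_format, OF this] show ?thesis using that by blast
    qed
    show "\<exists>d>0. \<forall>y. norm (y - x) < d \<longrightarrow> norm ((c y - c x) * g y - (c x - c x) * g x - 0) \<le> e * norm (y - x)"
    proof (intro exI[of _ "min d1 d2"] conjI allI impI)
      show "min d1 d2 > 0" using d1 d2 by simp
      fix y assume y: "norm (y - x) < min d1 d2"
      have gy: "\<bar>g y\<bar> \<le> (B + 1) * norm (y - x)"
      proof -
        have "g y = (g y - g x - g' (y - x)) + g' (y - x)" using g0 by simp
        then have "\<bar>g y\<bar> \<le> \<bar>g y - g x - g' (y - x)\<bar> + \<bar>g' (y - x)\<bar>" by linarith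
        then have "\<bar>g y\<bar> \<le> norm (g y - g x - g' (y - x)) + norm (g' (y - x))" by simp
        also have "\<dots> \<le> 1 * norm (y - x) + norm (y - x) * B" using d1(2)[of y] y B(2)[of "y - x"] by simp
        finally show ?thesis by (simp add: algebra_simps)
      qed
      have cy: "\<bar>c y - c x\<bar> \<le> e / (B + 1)" using d2(2)[of y] y by (simp add: dist_norm less_imp_le)
      have "norm ((c y - c x) * g y - (c x - c x) * g x - 0) = \<bar>c y - c x\<bar> * \<bar>g y\<bar>" by (simp add: abs_mult)
      also have "\<dots> \<le> (e / (B + 1)) * ((B + 1) * norm (y - x))"
        using cy gy by (intro mult_mono) auto
      also have "\<dots> = e * norm (y - x)" using B by (simp add: field_simps)
      finally show "norm ((c y - c x) * g y - (c x - c x) * g x - 0) \<le> e * norm (y - x)" .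
    qed
  qed
  moreover have "((\<lambda>w. c x * g w) has_derivative (\<lambda>v. c x * g' v)) (at x)"
    using g by (rule has_derivative_mult_right)
  ultimately have "((\<lambda>w. (c w - c x) * g w + c x * g w) has_derivative (\<lambda>v. 0 + c x * g' v)) (at x)"
    by (rule has_derivative_add)
  moreover have "(\<lambda>w. (c w - c x) * g w + c x * g w) = (\<lambda>w. c w * g w)" by (rule ext) (simp add: algebra_simps)
  ultimately show ?thesis by simp
qed

lemma pd_eta: "pd f v = (\<lambda>P. frechet_derivative f (at P) v)"
  by (rule ext) (simp add: pd_def)

locale HS =
  fixes H :: "R4 \<Rightarrow> real"
  assumes H2: "Ck_on 2 UNIV H" and crit0: "\<And>v. pd H v 0 = 0"
begin

definition D2 :: "R4 \<Rightarrow> R4 \<Rightarrow> R4 \<Rightarrow> real" where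
  "D2 i P = frechet_derivative (pd H i) (at P)"

lemma dH: "H differentiable (at P)"
  using H2 unfolding Ck2_unfold using differentiable_on_eq_differentiable_at[OF open_UNIV] by blast

lemma dHi: "i \<in> Basis \<Longrightarrow> (pd H i) differentiable (at P)"
  using H2 unfolding Ck2_unfold pd_eta using differentiable_on_eq_differentiable_at[OF open_UNIV] by blast

lemma cHij: "i \<in> Basis \<Longrightarrow> j \<in> Basis \<Longrightarrow> continuous_on UNIV (\<lambda>P. D2 i P j)"
  using H2 unfolding Ck2_unfold D2_def pd_eta by simp

lemma dHi_has: "i \<in> Basis \<Longrightarrow> (pd H i has_derivative D2 i P) (at P)"
  unfolding D2_def using dHi frechet_derivative_works by blast

lemma D2_linear: "i \<in> Basis \<Longrightarrow> linear (D2 i P)"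
  using dHi_has has_derivative_linear by blast

lemma basis4: "ex4 \<in> Basis" "ey4 \<in> Basis" "ep4 \<in> Basis" "eq4 \<in> Basis"
  by (auto simp: Basis_R4)

definition DXi :: "R4 \<Rightarrow> R4 \<Rightarrow> R4" where
  "DXi P v = (D2 ep4 P v, D2 eq4 P v, - D2 ex4 P v, - D2 ey4 P v)"

lemma xiH_eq: "xiH H = (\<lambda>P. (pd H ep4 P, pd H eq4 P, - pd H ex4 P, - pd H ey4 P))"
  by (rule ext) (simp add: xiH_def)

lemma xi_has_deriv: "(xiH H has_derivative DXi P) (at P)"
  unfolding xiH_eq DXi_def
  using dHi_has[OF basis4(1)] dHi_has[OF basis4(2)] dHi_has[OF basis4(3)] dHi_has[OF basis4(4)]
  by (intro has_derivative_Pair has_derivative_minus) (simp_all add: pd_eta)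

lemma fd_xi: "frechet_derivative (xiH H) (at P) = DXi P"
  using xi_has_deriv frechet_derivative_at by metis

lemma xi_differentiable: "xiH H differentiable (at P)"
  using xi_has_deriv differentiable_def by blast

lemma cont_xi_partials: "continuous_on UNIV (\<lambda>P. frechet_derivative (xiH H) (at P) j)" if "j \<in> Basis"
  unfolding fd_xi DXi_def
  using cHij[OF basis4(1) that] cHij[OF basis4(2) that] cHij[OF basis4(3) that] cHij[OF basis4(4) that]
  by (intro continuous_on_Pair continuous_on_minus) auto

lemma xi0: "xiH H 0 = 0"
  using crit0 by (simp add: xiH_def zero_prod_def)

definition F :: "R4 \<Rightarrow> R2" where
  "F P = (pd H ep4 P, pd H eq4 P)"

definition DF :: "R4 \<Rightarrow> R4 \<Rightarrow> R2" where
  "DF P v = (D2 ep4 P v, D2 eq4 P v)"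

lemma F_eq: "F = (\<lambda>P. (pd H ep4 P, pd H eq4 P))"
  by (rule ext) (simp add: F_def)

lemma F_has_deriv: "(F has_derivative DF P) (at P)"
  unfolding F_eq DF_def[abs_def]
  using dHi_has[OF basis4(3)] dHi_has[OF basis4(4)]
  by (intro has_derivative_Pair) (simp_all add: pd_eta)

lemma fd_F: "frechet_derivative F (at P) = DF P"
  using F_has_deriv frechet_derivative_at by metis

lemma F_differentiable: "F differentiable (at P)"
  using F_has_deriv differentiable_def by blast

lemma cont_F_partials: "continuous_on UNIV (\<lambda>P. frechet_derivative F (at P) j)" if "j \<in> Basis"
  unfolding fd_F DF_def
  using cHij[OF basis4(3) that] cHij[OF basis4(4) that]
  by (intro continuous_on_Pair) auto

lemma F0: "F 0 = 0"
  using crit0 by (simp add: F_def zero_prod_def)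

lemma proj_xi: "proj (xiH H P) = F P"
  by (simp add: proj_def xiH_def F_def)

end


locale HSz = HS +
  fixes z :: "R2 \<Rightarrow> real" and U :: "R2 set"
  assumes U: "open U" "0 \<in> U" and z2: "Ck_on 2 U z" and zsol: "solves_HJ H U z"
    and zx0: "pd z ex2 0 = 0" and zy0: "pd z ey2 0 = 0"
begin

lemma basis2: "ex2 \<in> Basis" "ey2 \<in> Basis" by (auto simp: Basis_R2)

lemma dz: "w \<in> U \<Longrightarrow> z differentiable (at w)"
  using z2 U unfolding Ck2_unfold using differentiable_on_eq_differentiable_at by blast

lemma dzi: "i \<in> Basis \<Longrightarrow> w \<in> U \<Longrightarrow> (pd z i) differentiable (at w)"
  using z2 U unfolding Ck2_unfold pd_eta using differentiable_on_eq_differentiable_at by blast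

definition Z :: "R2 \<Rightarrow> R2 \<Rightarrow> R2 \<Rightarrow> real" where
  "Z i w = frechet_derivative (pd z i) (at w)"

lemma czij: "i \<in> Basis \<Longrightarrow> j \<in> Basis \<Longrightarrow> continuous_on U (\<lambda>w. Z i w j)"
  using z2 unfolding Ck2_unfold Z_def pd_eta by simp

lemma dzi_has: "i \<in> Basis \<Longrightarrow> w \<in> U \<Longrightarrow> (pd z i has_derivative Z i w) (at w)"
  unfolding Z_def using dzi frechet_derivative_works by blast

lemma Z_linear: "i \<in> Basis \<Longrightarrow> w \<in> U \<Longrightarrow> linear (Z i w)"
  using dzi_has has_derivative_linear by blast

definition DJ :: "R2 \<Rightarrow> R2 \<Rightarrow> R4" where
  "DJ w v = (fst v, snd v, Z ex2 w v, Z ey2 w v)"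

lemma jet_eq: "jet z = (\<lambda>w. (fst w, snd w, pd z ex2 w, pd z ey2 w))"
  by (rule ext) (simp add: jet_def)

lemma J_has_deriv: "w \<in> U \<Longrightarrow> (jet z has_derivative DJ w) (at w)"
  unfolding jet_eq DJ_def[abs_def]
  using dzi_has[OF basis2(1)] dzi_has[OF basis2(2)]
  by (intro has_derivative_Pair has_derivative_fst has_derivative_snd has_derivative_ident) (simp_all add: pd_eta)

lemma fd_J: "w \<in> U \<Longrightarrow> frechet_derivative (jet z) (at w) = DJ w"
  using J_has_deriv frechet_derivative_at by metis

lemma J_differentiable: "w \<in> U \<Longrightarrow> jet z differentiable (at w)"
  using J_has_deriv differentiable_def by blast

lemma cont_J_partials: "continuous_on U (\<lambda>w. frechet_derivative (jet z) (at w) j)" if "j \<in> Basis"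
proof -
  have "continuous_on U (\<lambda>w. DJ w j)"
    unfolding DJ_def using czij[OF basis2(1) that] czij[OF basis2(2) that]
    by (intro continuous_on_Pair continuous_on_const) auto
  then show ?thesis using fd_J by (simp add: continuous_on_eq)
qed

lemma J0: "jet z 0 = 0"
  using zx0 zy0 by (simp add: jet_def zero_prod_def)

lemma fst_J: "proj (jet z w) = w"
  by (simp add: jet_def proj_def)

lemma schwarz0: "Z ex2 0 ey2 = Z ey2 0 ex2"
proof -
  have "frechet_derivative (\<lambda>w. frechet_derivative z (at w) (1,0)) (at 0) (0,1)
       = frechet_derivative (\<lambda>w. frechet_derivative z (at w) (0,1)) (at 0) (1,0)"
  proof (rule young_schwarz[OF U])
    show "\<And>w. w \<in> U \<Longrightarrow> z differentiable (at w)" by (rule dz)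
    show "(\<lambda>w. frechet_derivative z (at w) (1, 0)) differentiable (at 0)"
      using dzi[OF basis2(1) U(2)] by (simp add: pd_eta ex2_def)
    show "(\<lambda>w. frechet_derivative z (at w) (0, 1)) differentiable (at 0)"
      using dzi[OF basis2(2) U(2)] by (simp add: pd_eta ey2_def)
  qed
  then show ?thesis by (simp add: Z_def pd_eta ex2_def ey2_def)
qed

definition A :: "R2 \<Rightarrow> R2" where "A w = F (jet z w)"
definition DA :: "R2 \<Rightarrow> R2 \<Rightarrow> R2" where "DA w v = DF (jet z w) (DJ w v)"
definition K :: "R2 \<Rightarrow> R2" where "K = DA 0"

lemma A_has_deriv: "w \<in> U \<Longrightarrow> (A has_derivative DA w) (at w)"
proof -
  assume w: "w \<in> U"
  have "((\<lambda>w. F (jet z w)) has_derivative (\<lambda>v. DF (jet z w) (DJ w v))) (at w)"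
    using has_derivative_compose[OF J_has_deriv[OF w] F_has_deriv] .
  then show ?thesis by (simp add: A_def[abs_def] DA_def[abs_def])
qed

lemma K_linear: "linear K"
  unfolding K_def using A_has_deriv[OF U(2)] has_derivative_linear by blast

lemma A0: "A 0 = 0" by (simp add: A_def J0 F0)


lemma HJ_deriv_zero:
  assumes w: "w \<in> U"
  shows "frechet_derivative H (at (jet z w)) (DJ w v) = 0"
proof -
  have d1: "((\<lambda>w. H (jet z w)) has_derivative (\<lambda>v. frechet_derivative H (at (jet z w)) (DJ w v))) (at w)"
    using has_derivative_compose[OF J_has_deriv[OF w], of H] dH frechet_derivative_works by blast
  have "((\<lambda>w. 0::real) has_derivative (\<lambda>v. frechet_derivative H (at (jet z w)) (DJ w v))) (at w)"
    using has_derivative_transform_within_open[OF d1 U(1) w] zsol unfolding solves_HJ_def by auto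
  moreover have "((\<lambda>w. 0::real) has_derivative (\<lambda>v. 0)) (at w)" by (rule has_derivative_const)
  ultimately have "(\<lambda>v. frechet_derivative H (at (jet z w)) (DJ w v)) = (\<lambda>v. 0)"
    by (rule has_derivative_unique)
  then show ?thesis by metis
qed

lemma DH_expand: "frechet_derivative H (at P) (a, b, c, d) = a * pd H ex4 P + b * pd H ey4 P + c * pd H ep4 P + d * pd H eq4 P"
proof -
  have "linear (frechet_derivative H (at P))"
    using dH frechet_derivative_works has_derivative_linear by blast
  from lin4[OF this] show ?thesis by (simp add: pd_def)
qed

lemma HJ_x: "w \<in> U \<Longrightarrow> pd H ex4 (jet z w) + Z ex2 w ex2 * pd H ep4 (jet z w) + Z ey2 w ex2 * pd H eq4 (jet z w) = 0"
  using HJ_deriv_zero[of w ex2] by (simp add: DJ_def DH_expand ex2_def algebra_simps)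

lemma HJ_y: "w \<in> U \<Longrightarrow> pd H ey4 (jet z w) + Z ex2 w ey2 * pd H ep4 (jet z w) + Z ey2 w ey2 * pd H eq4 (jet z w) = 0"
  using HJ_deriv_zero[of w ey2] by (simp add: DJ_def DH_expand ey2_def algebra_simps)

lemma comp_deriv0: "i \<in> Basis \<Longrightarrow> ((\<lambda>w. pd H i (jet z w)) has_derivative (\<lambda>v. D2 i 0 (DJ 0 v))) (at 0)"
  using has_derivative_compose[OF J_has_deriv[OF U(2)] dHi_has] J0 by simp

lemma isCont_Z: "i \<in> Basis \<Longrightarrow> j \<in> Basis \<Longrightarrow> isCont (\<lambda>w. Z i w j) 0"
  using czij U continuous_on_eq_continuous_at by blast

lemma inv_aux:
  assumes i: "i \<in> Basis" and j: "j \<in> Basis"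
    and eq: "\<And>w. w \<in> U \<Longrightarrow> pd H i (jet z w) + Z ex2 w j * pd H ep4 (jet z w) + Z ey2 w j * pd H eq4 (jet z w) = 0"
  shows "D2 i 0 (DJ 0 v) + Z ex2 0 j * D2 ep4 0 (DJ 0 v) + Z ey2 0 j * D2 eq4 0 (DJ 0 v) = 0"
proof -
  have p0: "pd H ep4 (jet z 0) = 0" "pd H eq4 (jet z 0) = 0" using crit0 J0 by auto
  have a: "((\<lambda>w. Z ex2 w j * pd H ep4 (jet z w)) has_derivative (\<lambda>v. Z ex2 0 j * D2 ep4 0 (DJ 0 v))) (at 0)"
    by (rule has_derivative_cont_mult_zero[OF comp_deriv0[OF basis4(3)] p0(1) isCont_Z[OF basis2(1) j]])
  have b: "((\<lambda>w. Z ey2 w j * pd H eq4 (jet z w)) has_derivative (\<lambda>v. Z ey2 0 j * D2 eq4 0 (DJ 0 v))) (at 0)"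
    by (rule has_derivative_cont_mult_zero[OF comp_deriv0[OF basis4(4)] p0(2) isCont_Z[OF basis2(2) j]])
  have c: "((\<lambda>w. pd H i (jet z w) + Z ex2 w j * pd H ep4 (jet z w) + Z ey2 w j * pd H eq4 (jet z w)) has_derivative
      (\<lambda>v. D2 i 0 (DJ 0 v) + Z ex2 0 j * D2 ep4 0 (DJ 0 v) + Z ey2 0 j * D2 eq4 0 (DJ 0 v))) (at 0)"
    by (rule has_derivative_add[OF has_derivative_add[OF comp_deriv0[OF i] a] b])
  have "((\<lambda>w. 0::real) has_derivative (\<lambda>v. D2 i 0 (DJ 0 v) + Z ex2 0 j * D2 ep4 0 (DJ 0 v) + Z ey2 0 j * D2 eq4 0 (DJ 0 v))) (at 0)"
    using has_derivative_transform_within_open[OF c U(1) U(2)] eq by auto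
  moreover have "((\<lambda>w. 0::real) has_derivative (\<lambda>v. 0)) (at 0)" by (rule has_derivative_const)
  ultimately have "(\<lambda>v. D2 i 0 (DJ 0 v) + Z ex2 0 j * D2 ep4 0 (DJ 0 v) + Z ey2 0 j * D2 eq4 0 (DJ 0 v)) = (\<lambda>v. 0)"
    by (rule has_derivative_unique)
  then show ?thesis by metis
qed

lemma K_eq: "K v = (D2 ep4 0 (DJ 0 v), D2 eq4 0 (DJ 0 v))"
  by (simp add: K_def DA_def DF_def J0)

definition L :: "R4 \<Rightarrow> R4" where "L = frechet_derivative (xiH H) (at 0)"

lemma L_eq: "L = DXi 0" by (simp add: L_def fd_xi)

lemma invariance: "L (DJ 0 v) = DJ 0 (K v)"
proof -
  have ix: "D2 ex4 0 (DJ 0 v) + Z ex2 0 ex2 * D2 ep4 0 (DJ 0 v) + Z ey2 0 ex2 * D2 eq4 0 (DJ 0 v) = 0"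
    by (rule inv_aux[OF basis4(1) basis2(1) HJ_x])
  have iy: "D2 ey4 0 (DJ 0 v) + Z ex2 0 ey2 * D2 ep4 0 (DJ 0 v) + Z ey2 0 ey2 * D2 eq4 0 (DJ 0 v) = 0"
    by (rule inv_aux[OF basis4(2) basis2(2) HJ_y])
  have l1: "Z ex2 0 (a, b) = a * Z ex2 0 ex2 + b * Z ex2 0 ey2" for a b
    using lin2[OF Z_linear[OF basis2(1) U(2)]] .
  have l2: "Z ey2 0 (a, b) = a * Z ey2 0 ex2 + b * Z ey2 0 ey2" for a b
    using lin2[OF Z_linear[OF basis2(2) U(2)]] .
  show ?thesis
    unfolding L_eq DXi_def K_eq
    using ix iy schwarz0 by (simp add: DJ_def l1 l2 algebra_simps)
qed

end

lemma vand_aux: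
  fixes x1 x2 x3 x4 l1 l2 l3 l4 :: real
  assumes "x1 + x2 + x3 + x4 = 0"
    "l1*x1 + l2*x2 + l3*x3 + l4*x4 = 0"
    "l1^2*x1 + l2^2*x2 + l3^2*x3 + l4^2*x4 = 0"
    "l1^3*x1 + l2^3*x2 + l3^3*x3 + l4^3*x4 = 0"
    and "l1 \<noteq> l2" "l1 \<noteq> l3" "l1 \<noteq> l4"
  shows "x1 = 0"
proof -
  have "(l1-l2)*(l1-l3)*(l1-l4)*x1 =
     (l1^3*x1 + l2^3*x2 + l3^3*x3 + l4^3*x4) - (l2+l3+l4)*(l1^2*x1 + l2^2*x2 + l3^2*x3 + l4^2*x4)
     + (l2*l3+l2*l4+l3*l4)*(l1*x1 + l2*x2 + l3*x3 + l4*x4) - l2*l3*l4*(x1 + x2 + x3 + x4)"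
    by (simp add: algebra_simps power2_eq_square power3_eq_cube)
  also have "\<dots> = 0" using assms(1-4) by simp
  finally show ?thesis using assms(5-7) by simp
qed

lemma eig_indep:
  fixes L :: "'v::real_inner \<Rightarrow> 'v"
  assumes lL: "linear L"
    and ne: "e1 \<noteq> 0" "e2 \<noteq> 0" "e3 \<noteq> 0" "e4 \<noteq> 0"
    and ev: "L e1 = l1 *\<^sub>R e1" "L e2 = l2 *\<^sub>R e2" "L e3 = l3 *\<^sub>R e3" "L e4 = l4 *\<^sub>R e4"
    and dist: "l1 \<noteq> l2" "l1 \<noteq> l3" "l1 \<noteq> l4" "l2 \<noteq> l3" "l2 \<noteq> l4" "l3 \<noteq> l4"
    and s: "d1 *\<^sub>R e1 + d2 *\<^sub>R e2 + d3 *\<^sub>R e3 + d4 *\<^sub>R e4 = 0"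
  shows "d1 = 0 \<and> d2 = 0 \<and> d3 = 0 \<and> d4 = 0"
proof -
  have Lsum: "L (c1 *\<^sub>R e1 + c2 *\<^sub>R e2 + c3 *\<^sub>R e3 + c4 *\<^sub>R e4) =
       (c1*l1) *\<^sub>R e1 + (c2*l2) *\<^sub>R e2 + (c3*l3) *\<^sub>R e3 + (c4*l4) *\<^sub>R e4" for c1 c2 c3 c4
    using ev by (simp add: linear_add[OF lL] linear_scale[OF lL])
  have z0: "L 0 = 0" using linear_0[OF lL] .
  have s1: "(d1*l1) *\<^sub>R e1 + (d2*l2) *\<^sub>R e2 + (d3*l3) *\<^sub>R e3 + (d4*l4) *\<^sub>R e4 = 0"
    using Lsum[of d1 d2 d3 d4] s z0 by simp
  have s2: "(d1*l1*l1) *\<^sub>R e1 + (d2*l2*l2) *\<^sub>R e2 + (d3*l3*l3) *\<^sub>R e3 + (d4*l4*l4) *\<^sub>R e4 = 0"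
    using Lsum[of "d1*l1" "d2*l2" "d3*l3" "d4*l4"] s1 z0 by simp
  have s3: "(d1*l1*l1*l1) *\<^sub>R e1 + (d2*l2*l2*l2) *\<^sub>R e2 + (d3*l3*l3*l3) *\<^sub>R e3 + (d4*l4*l4*l4) *\<^sub>R e4 = 0"
    using Lsum[of "d1*l1*l1" "d2*l2*l2" "d3*l3*l3" "d4*l4*l4"] s2 z0 by simp
  have inner0: "(c1 *\<^sub>R e1 + c2 *\<^sub>R e2 + c3 *\<^sub>R e3 + c4 *\<^sub>R e4) \<bullet> y = c1 * (e1 \<bullet> y) + c2 * (e2 \<bullet> y) + c3 * (e3 \<bullet> y) + c4 * (e4 \<bullet> y)"
    for c1 c2 c3 c4 y by (simp add: inner_add_left)
  have eqs: "d1 * (e1 \<bullet> y) + d2 * (e2 \<bullet> y) + d3 * (e3 \<bullet> y) + d4 * (e4 \<bullet> y) = 0"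
    "l1 * (d1 * (e1 \<bullet> y)) + l2 * (d2 * (e2 \<bullet> y)) + l3 * (d3 * (e3 \<bullet> y)) + l4 * (d4 * (e4 \<bullet> y)) = 0"
    "l1^2 * (d1 * (e1 \<bullet> y)) + l2^2 * (d2 * (e2 \<bullet> y)) + l3^2 * (d3 * (e3 \<bullet> y)) + l4^2 * (d4 * (e4 \<bullet> y)) = 0"
    "l1^3 * (d1 * (e1 \<bullet> y)) + l2^3 * (d2 * (e2 \<bullet> y)) + l3^3 * (d3 * (e3 \<bullet> y)) + l4^3 * (d4 * (e4 \<bullet> y)) = 0"
    for y
  proof -
    show "d1 * (e1 \<bullet> y) + d2 * (e2 \<bullet> y) + d3 * (e3 \<bullet> y) + d4 * (e4 \<bullet> y) = 0"
      using arg_cong[OF s, of "\<lambda>v. v \<bullet> y"] unfolding inner0 by simp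
    show "l1 * (d1 * (e1 \<bullet> y)) + l2 * (d2 * (e2 \<bullet> y)) + l3 * (d3 * (e3 \<bullet> y)) + l4 * (d4 * (e4 \<bullet> y)) = 0"
      using arg_cong[OF s1, of "\<lambda>v. v \<bullet> y"] unfolding inner0 by (simp add: algebra_simps)
    show "l1^2 * (d1 * (e1 \<bullet> y)) + l2^2 * (d2 * (e2 \<bullet> y)) + l3^2 * (d3 * (e3 \<bullet> y)) + l4^2 * (d4 * (e4 \<bullet> y)) = 0"
      using arg_cong[OF s2, of "\<lambda>v. v \<bullet> y"] unfolding inner0 by (simp add: algebra_simps power2_eq_square)
    show "l1^3 * (d1 * (e1 \<bullet> y)) + l2^3 * (d2 * (e2 \<bullet> y)) + l3^3 * (d3 * (e3 \<bullet> y)) + l4^3 * (d4 * (e4 \<bullet> y)) = 0"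
      using arg_cong[OF s3, of "\<lambda>v. v \<bullet> y"] unfolding inner0 by (simp add: algebra_simps power3_eq_cube)
  qed
  have x1: "d1 * (e1 \<bullet> e1) = 0"
    using vand_aux[OF eqs[of e1] dist(1-3)] .
  have x2: "d2 * (e2 \<bullet> e2) = 0"
    using vand_aux[of "d2 * (e2 \<bullet> e2)" "d1 * (e1 \<bullet> e2)" "d3 * (e3 \<bullet> e2)" "d4 * (e4 \<bullet> e2)" l2 l1 l3 l4] eqs[of e2] dist
    by (simp add: algebra_simps)
  have x3: "d3 * (e3 \<bullet> e3) = 0"
    using vand_aux[of "d3 * (e3 \<bullet> e3)" "d1 * (e1 \<bullet> e3)" "d2 * (e2 \<bullet> e3)" "d4 * (e4 \<bullet> e3)" l3 l1 l2 l4] eqs[of e3] dist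
    by (simp add: algebra_simps)
  have x4: "d4 * (e4 \<bullet> e4) = 0"
    using vand_aux[of "d4 * (e4 \<bullet> e4)" "d1 * (e1 \<bullet> e4)" "d2 * (e2 \<bullet> e4)" "d3 * (e3 \<bullet> e4)" l4 l1 l2 l3] eqs[of e4] dist
    by (simp add: algebra_simps)
  show ?thesis using x1 x2 x3 x4 ne by simp
qed


lemma eig_span:
  fixes L :: "R4 \<Rightarrow> R4"
  assumes lL: "linear L"
    and ne: "e1 \<noteq> 0" "e2 \<noteq> 0" "e3 \<noteq> 0" "e4 \<noteq> 0"
    and ev: "L e1 = l1 *\<^sub>R e1" "L e2 = l2 *\<^sub>R e2" "L e3 = l3 *\<^sub>R e3" "L e4 = l4 *\<^sub>R e4"
    and dist: "l1 \<noteq> l2" "l1 \<noteq> l3" "l1 \<noteq> l4" "l2 \<noteq> l3" "l2 \<noteq> l4" "l3 \<noteq> l4"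
  shows "\<exists>c1 c2 c3 c4. v = c1 *\<^sub>R e1 + c2 *\<^sub>R e2 + c3 *\<^sub>R e3 + c4 *\<^sub>R e4"
proof -
  have neq: "e1 \<noteq> e2" "e1 \<noteq> e3" "e1 \<noteq> e4" "e2 \<noteq> e3" "e2 \<noteq> e4" "e3 \<noteq> e4"
  proof -
    have gen: "x \<noteq> y" if "L x = p *\<^sub>R x" "L y = q *\<^sub>R y" "p \<noteq> q" "x \<noteq> 0" for x y p q
    proof
      assume "x = y"
      then have "(p - q) *\<^sub>R x = 0" using that by (simp add: scaleR_diff_left)
      then show False using that by simp
    qed
    show "e1 \<noteq> e2" "e1 \<noteq> e3" "e1 \<noteq> e4" "e2 \<noteq> e3" "e2 \<noteq> e4" "e3 \<noteq> e4"
      using gen ev dist ne by metis+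
  qed
  define S where "S = {e1, e2, e3, e4}"
  have fin: "finite S" by (simp add: S_def)
  have sumS: "(\<Sum>x\<in>S. u x *\<^sub>R x) = u e1 *\<^sub>R e1 + u e2 *\<^sub>R e2 + u e3 *\<^sub>R e3 + u e4 *\<^sub>R e4" for u
    using neq by (simp add: S_def add.assoc)
  have ind: "independent S"
  proof
    assume "dependent S"
    then obtain u where u: "\<exists>v\<in>S. u v \<noteq> 0" "(\<Sum>v\<in>S. u v *\<^sub>R v) = 0"
      using dependent_finite[OF fin] by blast
    have "u e1 = 0 \<and> u e2 = 0 \<and> u e3 = 0 \<and> u e4 = 0"
      using eig_indep[OF lL ne ev dist] u(2) unfolding sumS by blast
    then show False using u(1) by (auto simp: S_def)
  qed
  have card: "card S = 4" using neq by (simp add: S_def)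
  have "UNIV \<subseteq> span S"
    by (rule card_ge_dim_independent) (use ind card in auto)
  then have "v \<in> span S" by blast
  then obtain u where "v = (\<Sum>x\<in>S. u x *\<^sub>R x)" using span_finite[OF fin] by blast
  then show ?thesis unfolding sumS by blast
qed


lemma spectral_disc:
  fixes L :: "R4 \<Rightarrow> R4" and T :: "R2 \<Rightarrow> R4" and K :: "R2 \<Rightarrow> R2"
  assumes lL: "linear L" and lT: "linear T" and lK: "linear K" and injT: "\<And>w. T w = 0 \<Longrightarrow> w = 0"
    and inv: "\<And>v. L (T v) = T (K v)"
    and ne: "e1 \<noteq> 0" "e2 \<noteq> 0" "e3 \<noteq> 0" "e4 \<noteq> 0"
    and ev: "L e1 = l1 *\<^sub>R e1" "L e2 = l2 *\<^sub>R e2" "L e3 = l3 *\<^sub>R e3" "L e4 = l4 *\<^sub>R e4"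
    and dist: "l1 \<noteq> l2" "l1 \<noteq> l3" "l1 \<noteq> l4" "l2 \<noteq> l3" "l2 \<noteq> l4" "l3 \<noteq> l4"
  shows "(fst (K ex2) + snd (K ey2))^2 - 4 * (fst (K ex2) * snd (K ey2) - fst (K ey2) * snd (K ex2)) > 0"
proof -
  define k11 where "k11 = fst (K ex2)"
  define k21 where "k21 = snd (K ex2)"
  define k12 where "k12 = fst (K ey2)"
  define k22 where "k22 = snd (K ey2)"
  define \<tau> where "\<tau> = k11 + k22"
  define \<delta> where "\<delta> = k11 * k22 - k12 * k21"
  have Kex: "K ex2 = (k11, k21)" and Key: "K ey2 = (k12, k22)" by (simp_all add: k11_def k21_def k12_def k22_def)
  have Kab: "K (a, b) = (a * k11 + b * k12, a * k21 + b * k22)" for a b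
    using lin2v[OF lK, of a b] Kex Key by simp
  have CH: "K (K w) - \<tau> *\<^sub>R K w + \<delta> *\<^sub>R w = 0" for w
  proof -
    obtain a b where w: "w = (a, b)" by fastforce
    show ?thesis unfolding w Kab \<tau>_def \<delta>_def by (simp add: algebra_simps zero_prod_def)
  qed
  have PT: "L (L (T w)) - \<tau> *\<^sub>R L (T w) + \<delta> *\<^sub>R T w = 0" for w
  proof -
    have "L (L (T w)) - \<tau> *\<^sub>R L (T w) + \<delta> *\<^sub>R T w = T (K (K w)) - \<tau> *\<^sub>R T (K w) + \<delta> *\<^sub>R T w"
      by (simp add: inv)
    also have "\<dots> = T (K (K w) - \<tau> *\<^sub>R K w + \<delta> *\<^sub>R w)"
      by (simp add: linear_add[OF lT] linear_diff[OF lT] linear_scale[OF lT])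
    also have "\<dots> = 0" using CH linear_0[OF lT] by simp
    finally show ?thesis .
  qed
  define p where "p l = l^2 - \<tau> * l + \<delta>" for l
  have Lsum: "L (c1 *\<^sub>R e1 + c2 *\<^sub>R e2 + c3 *\<^sub>R e3 + c4 *\<^sub>R e4) =
       (c1*l1) *\<^sub>R e1 + (c2*l2) *\<^sub>R e2 + (c3*l3) *\<^sub>R e3 + (c4*l4) *\<^sub>R e4" for c1 c2 c3 c4
    using ev by (simp add: linear_add[OF lL] linear_scale[OF lL])
  have coef: "c1 * p l1 = 0 \<and> c2 * p l2 = 0 \<and> c3 * p l3 = 0 \<and> c4 * p l4 = 0"
    if v: "T w = c1 *\<^sub>R e1 + c2 *\<^sub>R e2 + c3 *\<^sub>R e3 + c4 *\<^sub>R e4" for w c1 c2 c3 c4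
  proof -
    have "L (L (T w)) - \<tau> *\<^sub>R L (T w) + \<delta> *\<^sub>R T w =
      (c1 * p l1) *\<^sub>R e1 + (c2 * p l2) *\<^sub>R e2 + (c3 * p l3) *\<^sub>R e3 + (c4 * p l4) *\<^sub>R e4"
      unfolding v Lsum p_def by (simp add: algebra_simps power2_eq_square)
    then have "(c1 * p l1) *\<^sub>R e1 + (c2 * p l2) *\<^sub>R e2 + (c3 * p l3) *\<^sub>R e3 + (c4 * p l4) *\<^sub>R e4 = 0"
      using PT by simp
    then show ?thesis by (rule eig_indep[OF lL ne ev dist])
  qed
  have key: False if "T ex2 = c *\<^sub>R e" "T ey2 = d *\<^sub>R e" for c d e
  proof -
    have "T (d *\<^sub>R ex2 - c *\<^sub>R ey2) = d *\<^sub>R T ex2 - c *\<^sub>R T ey2"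
      by (simp add: linear_diff[OF lT] linear_scale[OF lT])
    also have "\<dots> = 0" using that by (simp add: algebra_simps)
    finally have "d *\<^sub>R ex2 - c *\<^sub>R ey2 = 0" by (rule injT)
    then have "c = 0" by (simp add: ex2_def ey2_def zero_prod_def)
    then have "T ex2 = 0" using that by simp
    then have "ex2 = 0" by (rule injT)
    then show False by (simp add: ex2_def zero_prod_def)
  qed
  obtain c1 c2 c3 c4 where X: "T ex2 = c1 *\<^sub>R e1 + c2 *\<^sub>R e2 + c3 *\<^sub>R e3 + c4 *\<^sub>R e4"
    using eig_span[OF lL ne ev dist] by blast
  obtain d1 d2 d3 d4 where Y: "T ey2 = d1 *\<^sub>R e1 + d2 *\<^sub>R e2 + d3 *\<^sub>R e3 + d4 *\<^sub>R e4"
    using eig_span[OF lL ne ev dist] by blast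
  note cX = coef[OF X] and cY = coef[OF Y]
  show ?thesis
  proof (rule ccontr)
    assume "\<not> ?thesis"
    then have disc: "\<tau>^2 - 4 * \<delta> \<le> 0" by (simp add: \<tau>_def \<delta>_def k11_def k12_def k21_def k22_def)
    have pz: "p l = 0 \<longleftrightarrow> l = \<tau>/2 \<and> \<tau>^2 - 4 * \<delta> = 0" for l
    proof -
      have "p l = (l - \<tau>/2)^2 + (4*\<delta> - \<tau>^2)/4" by (simp add: p_def power2_eq_square field_simps)
      moreover have "(l - \<tau>/2)^2 \<ge> 0" by simp
      moreover have "(4*\<delta> - \<tau>^2)/4 \<ge> 0" using disc by simp
      ultimately have "p l = 0 \<longleftrightarrow> (l - \<tau>/2)^2 = 0 \<and> (4*\<delta> - \<tau>^2)/4 = 0" by linarith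
      then show ?thesis by auto
    qed
    have "\<exists>e c d. T ex2 = c *\<^sub>R e \<and> T ey2 = d *\<^sub>R e"
    proof (cases "l1 = \<tau>/2 \<or> l2 = \<tau>/2 \<or> l3 = \<tau>/2 \<or> l4 = \<tau>/2")
      case False
      then have "p l1 \<noteq> 0" "p l2 \<noteq> 0" "p l3 \<noteq> 0" "p l4 \<noteq> 0" using pz by auto
      then have "T ex2 = 0" "T ey2 = 0" using X Y cX cY by auto
      then show ?thesis by (metis scaleR_zero_left)
    next
      case True
      then show ?thesis
      proof (elim disjE)
        assume h: "l1 = \<tau>/2"
        then have "p l2 \<noteq> 0" "p l3 \<noteq> 0" "p l4 \<noteq> 0" using pz dist by auto
        then have "T ex2 = c1 *\<^sub>R e1" "T ey2 = d1 *\<^sub>R e1" using X Y cX cY by auto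
        then show ?thesis by blast
      next
        assume h: "l2 = \<tau>/2"
        then have "p l1 \<noteq> 0" "p l3 \<noteq> 0" "p l4 \<noteq> 0" using pz dist by auto
        then have "T ex2 = c2 *\<^sub>R e2" "T ey2 = d2 *\<^sub>R e2" using X Y cX cY by auto
        then show ?thesis by blast
      next
        assume h: "l3 = \<tau>/2"
        then have "p l1 \<noteq> 0" "p l2 \<noteq> 0" "p l4 \<noteq> 0" using pz dist by auto
        then have "T ex2 = c3 *\<^sub>R e3" "T ey2 = d3 *\<^sub>R e3" using X Y cX cY by auto
        then show ?thesis by blast
      next
        assume h: "l4 = \<tau>/2"
        then have "p l1 \<noteq> 0" "p l2 \<noteq> 0" "p l3 \<noteq> 0" using pz dist by auto
        then have "T ex2 = c4 *\<^sub>R e4" "T ey2 = d4 *\<^sub>R e4" using X Y cX cY by auto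
        then show ?thesis by blast
      qed
    qed
    then show False using key by blast
  qed
qed


lemma left_eig_exists:
  fixes K :: "R2 \<Rightarrow> R2"
  assumes lK: "linear K"
    and disc: "(fst (K ex2) + snd (K ey2))^2 - 4 * (fst (K ex2) * snd (K ey2) - fst (K ey2) * snd (K ex2)) > 0"
    and root: "l^2 - (fst (K ex2) + snd (K ey2)) * l + (fst (K ex2) * snd (K ey2) - fst (K ey2) * snd (K ex2)) = 0"
  shows "\<exists>v. v \<noteq> 0 \<and> (\<forall>w. v \<bullet> K w = l * (v \<bullet> w))"
proof -
  define k11 where "k11 = fst (K ex2)"
  define k21 where "k21 = snd (K ex2)"
  define k12 where "k12 = fst (K ey2)"
  define k22 where "k22 = snd (K ey2)"
  have Kex: "K ex2 = (k11, k21)" and Key: "K ey2 = (k12, k22)" by (simp_all add: k11_def k21_def k12_def k22_def)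
  have Kab: "K (a, b) = (a * k11 + b * k12, a * k21 + b * k22)" for a b
    using lin2v[OF lK, of a b] Kex Key by simp
  have r: "l^2 - (k11 + k22) * l + (k11 * k22 - k12 * k21) = 0" using root by (simp add: k11_def k12_def k21_def k22_def)
  have d: "(k11 + k22)^2 - 4 * (k11 * k22 - k12 * k21) > 0" using disc by (simp add: k11_def k12_def k21_def k22_def)
  have good: "\<forall>w. v \<bullet> K w = l * (v \<bullet> w)" if "fst v * (k11 - l) + snd v * k21 = 0" "fst v * k12 + snd v * (k22 - l) = 0" for v
  proof
    fix w :: R2
    obtain a b where w: "w = (a, b)" by fastforce
    obtain c e where v: "v = (c, e)" by fastforce
    have h1: "c*k11 + e*k21 = c*l" "c*k12 + e*k22 = e*l" using that unfolding v by (simp_all add: algebra_simps)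
    have "v \<bullet> K w = a*(c*k11 + e*k21) + b*(c*k12 + e*k22)" unfolding w v Kab by (simp add: inner_prod_def algebra_simps)
    also have "\<dots> = l * (v \<bullet> w)" unfolding h1 unfolding w v by (simp add: inner_prod_def algebra_simps)
    finally show "v \<bullet> K w = l * (v \<bullet> w)" .
  qed
  show ?thesis
  proof (cases "(k21, l - k11) = 0")
    case False
    have "fst (k21, l - k11) * (k11 - l) + snd (k21, l - k11) * k21 = 0" by (simp add: algebra_simps)
    moreover have "fst (k21, l - k11) * k12 + snd (k21, l - k11) * (k22 - l) = 0"
      using r by (simp add: algebra_simps power2_eq_square)
    ultimately show ?thesis using good False by blast
  next
    case True
    then have t: "k21 = 0" "l = k11" by (auto simp: zero_prod_def)
    show ?thesis
    proof (cases "(l - k22, k12) = 0")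
      case False
      have "fst (l - k22, k12) * (k11 - l) + snd (l - k22, k12) * k21 = 0"
        using r by (simp add: algebra_simps power2_eq_square)
      moreover have "fst (l - k22, k12) * k12 + snd (l - k22, k12) * (k22 - l) = 0" by (simp add: algebra_simps)
      ultimately show ?thesis using good False by blast
    next
      case True
      then have "k12 = 0" "l = k22" by (auto simp: zero_prod_def)
      then show ?thesis using d t by (simp add: power2_eq_square)
    qed
  qed
qed

lemma left_eig_bound:
  fixes K :: "R2 \<Rightarrow> R2"
  assumes lK: "linear K" and n1: "v1 \<noteq> 0" and n2: "v2 \<noteq> 0"
    and e1: "\<And>w. v1 \<bullet> K w = l1 * (v1 \<bullet> w)" and e2: "\<And>w. v2 \<bullet> K w = l2 * (v2 \<bullet> w)"
    and ne: "l1 \<noteq> l2"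
  shows "\<exists>C>0. \<forall>w. norm w \<le> C * (\<bar>v1 \<bullet> w\<bar> + \<bar>v2 \<bullet> w\<bar>)"
proof -
  have par: "\<alpha> = 0 \<and> \<beta> = 0" if h: "\<alpha> *\<^sub>R v1 = \<beta> *\<^sub>R v2" for \<alpha> \<beta>
  proof -
    have i1: "\<alpha> * (v1 \<bullet> w) = \<beta> * (v2 \<bullet> w)" for w using arg_cong[OF h, of "\<lambda>x. x \<bullet> w"] by simp
    have "\<alpha> * (l1 - l2) * (v1 \<bullet> w) = 0" for w
    proof -
      have "\<alpha> * (v1 \<bullet> K w) = \<beta> * (v2 \<bullet> K w)" using i1 .
      then have "\<alpha> * l1 * (v1 \<bullet> w) = \<beta> * l2 * (v2 \<bullet> w)" using e1 e2 by (simp add: mult.assoc)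
      also have "\<dots> = l2 * (\<alpha> * (v1 \<bullet> w))" using i1 by (simp add: algebra_simps)
      finally show ?thesis by (simp add: algebra_simps)
    qed
    from this[of v1] have "\<alpha> = 0" using n1 ne by simp
    then have "\<beta> *\<^sub>R v2 = 0" using h by simp
    then show ?thesis using n2 \<open>\<alpha> = 0\<close> by simp
  qed
  obtain p1 q1 where v1: "v1 = (p1, q1)" by fastforce
  obtain p2 q2 where v2: "v2 = (p2, q2)" by fastforce
  define m where "m = p1 * q2 - q1 * p2"
  have m: "m \<noteq> 0"
  proof
    assume m0: "m = 0"
    have "p2 *\<^sub>R v1 = p1 *\<^sub>R v2" using m0 unfolding v1 v2 m_def by (simp add: algebra_simps)
    then have "p2 = 0 \<and> p1 = 0" using par by blast
    moreover have "q2 *\<^sub>R v1 = q1 *\<^sub>R v2" using m0 unfolding v1 v2 m_def by (simp add: algebra_simps)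
    then have "q2 = 0 \<and> q1 = 0" using par by blast
    ultimately show False using n1 v1 by (simp add: zero_prod_def)
  qed
  define C where "C = (\<bar>p1\<bar> + \<bar>q1\<bar> + \<bar>p2\<bar> + \<bar>q2\<bar>) / \<bar>m\<bar> + 1"
  have C: "C > 0" using m by (simp add: C_def add_nonneg_pos)
  have "norm w \<le> C * (\<bar>v1 \<bullet> w\<bar> + \<bar>v2 \<bullet> w\<bar>)" for w
  proof -
    obtain x y where w: "w = (x, y)" by fastforce
    define u1 where "u1 = p1 * x + q1 * y"
    define u2 where "u2 = p2 * x + q2 * y"
    have vx: "v1 \<bullet> w = u1" "v2 \<bullet> w = u2" by (simp_all add: v1 v2 w u1_def u2_def inner_prod_def)
    have xe: "m * x = q2 * u1 - q1 * u2" and ye: "m * y = p1 * u2 - p2 * u1"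
      by (simp_all add: m_def u1_def u2_def algebra_simps)
    have hx0: "\<bar>m\<bar> * \<bar>x\<bar> = \<bar>q2 * u1 - q1 * u2\<bar>" by (simp add: xe abs_mult[symmetric])
    have hx1: "\<bar>q2 * u1 - q1 * u2\<bar> \<le> \<bar>q2 * u1\<bar> + \<bar>q1 * u2\<bar>" by (rule abs_triangle_ineq4)
    have hy0: "\<bar>m\<bar> * \<bar>y\<bar> = \<bar>p1 * u2 - p2 * u1\<bar>" by (simp add: ye abs_mult[symmetric])
    have hy1: "\<bar>p1 * u2 - p2 * u1\<bar> \<le> \<bar>p1 * u2\<bar> + \<bar>p2 * u1\<bar>" by (rule abs_triangle_ineq4)
    have am: "\<bar>q2 * u1\<bar> = \<bar>q2\<bar>*\<bar>u1\<bar>" "\<bar>q1 * u2\<bar> = \<bar>q1\<bar>*\<bar>u2\<bar>" "\<bar>p1 * u2\<bar> = \<bar>p1\<bar>*\<bar>u2\<bar>" "\<bar>p2 * u1\<bar> = \<bar>p2\<bar>*\<bar>u1\<bar>"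
      by (simp_all add: abs_mult)
    have e1: "(\<bar>p1\<bar> + \<bar>q1\<bar> + \<bar>p2\<bar> + \<bar>q2\<bar>) * (\<bar>u1\<bar> + \<bar>u2\<bar>) = \<bar>q2\<bar>*\<bar>u1\<bar> + \<bar>q1\<bar>*\<bar>u2\<bar> + \<bar>p1\<bar>*\<bar>u2\<bar> + \<bar>p2\<bar>*\<bar>u1\<bar> + (\<bar>p1\<bar>*\<bar>u1\<bar> + \<bar>q1\<bar>*\<bar>u1\<bar> + \<bar>p2\<bar>*\<bar>u2\<bar> + \<bar>q2\<bar>*\<bar>u2\<bar>)"
      by (simp add: algebra_simps)
    have e2: "\<bar>p1\<bar>*\<bar>u1\<bar> + \<bar>q1\<bar>*\<bar>u1\<bar> + \<bar>p2\<bar>*\<bar>u2\<bar> + \<bar>q2\<bar>*\<bar>u2\<bar> \<ge> 0" by simp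
    have e3: "\<bar>m\<bar> * (\<bar>x\<bar> + \<bar>y\<bar>) = \<bar>m\<bar> * \<bar>x\<bar> + \<bar>m\<bar> * \<bar>y\<bar>" by (simp add: algebra_simps)
    have "\<bar>m\<bar> * (\<bar>x\<bar> + \<bar>y\<bar>) \<le> (\<bar>p1\<bar> + \<bar>q1\<bar> + \<bar>p2\<bar> + \<bar>q2\<bar>) * (\<bar>u1\<bar> + \<bar>u2\<bar>)"
      using hx0 hx1 hy0 hy1 am e1 e2 e3 by linarith
    then have "\<bar>x\<bar> + \<bar>y\<bar> \<le> (\<bar>p1\<bar> + \<bar>q1\<bar> + \<bar>p2\<bar> + \<bar>q2\<bar>) / \<bar>m\<bar> * (\<bar>u1\<bar> + \<bar>u2\<bar>)"
      using m by (simp add: field_simps mult.commute)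
    also have "\<dots> \<le> C * (\<bar>u1\<bar> + \<bar>u2\<bar>)" unfolding C_def by (simp add: distrib_right)
    finally have "\<bar>x\<bar> + \<bar>y\<bar> \<le> C * (\<bar>u1\<bar> + \<bar>u2\<bar>)" .
    moreover have "norm w \<le> \<bar>x\<bar> + \<bar>y\<bar>" using norm_Pair_le[of x y] w by simp
    ultimately show ?thesis using vx by simp
  qed
  then show ?thesis using C by blast
qed

context HSz
begin

lemma DJ_linear: "linear (DJ 0)"
  using J_has_deriv[OF U(2)] has_derivative_linear by blast

lemma DJ_inj: "DJ 0 w = 0 \<Longrightarrow> w = 0"
  by (simp add: DJ_def zero_prod_def prod_eq_iff)

lemma L_linear: "linear L"
  unfolding L_def using xi_has_deriv[of 0] frechet_derivative_at has_derivative_linear by metis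

lemma K_spectral:
  assumes ne: "e1 \<noteq> 0" "e2 \<noteq> 0" "e3 \<noteq> 0" "e4 \<noteq> 0"
    and ev: "L e1 = l1 *\<^sub>R e1" "L e2 = l2 *\<^sub>R e2" "L e3 = l3 *\<^sub>R e3" "L e4 = l4 *\<^sub>R e4"
    and dist: "l1 \<noteq> l2" "l1 \<noteq> l3" "l1 \<noteq> l4" "l2 \<noteq> l3" "l2 \<noteq> l4" "l3 \<noteq> l4"
    and nz: "l1 \<noteq> 0" "l2 \<noteq> 0" "l3 \<noteq> 0" "l4 \<noteq> 0"
  shows "\<exists>v1 v2 m1 m2 C. v1 \<noteq> 0 \<and> v2 \<noteq> 0 \<and> m2 < m1 \<and> m1 \<noteq> 0 \<and> m2 \<noteq> 0 \<and>
     (\<forall>w. v1 \<bullet> K w = m1 * (v1 \<bullet> w)) \<and> (\<forall>w. v2 \<bullet> K w = m2 * (v2 \<bullet> w)) \<and>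
     C > 0 \<and> (\<forall>w. norm w \<le> C * (\<bar>v1 \<bullet> w\<bar> + \<bar>v2 \<bullet> w\<bar>))"
proof -
  define \<tau> where "\<tau> = fst (K ex2) + snd (K ey2)"
  define \<delta> where "\<delta> = fst (K ex2) * snd (K ey2) - fst (K ey2) * snd (K ex2)"
  have disc: "\<tau>^2 - 4 * \<delta> > 0"
    unfolding \<tau>_def \<delta>_def
    by (rule spectral_disc[OF L_linear DJ_linear K_linear DJ_inj invariance ne ev dist])
  define m1 where "m1 = (\<tau> + sqrt (\<tau>^2 - 4 * \<delta>)) / 2"
  define m2 where "m2 = (\<tau> - sqrt (\<tau>^2 - 4 * \<delta>)) / 2"
  have sq: "sqrt (\<tau>^2 - 4 * \<delta>) > 0" "(sqrt (\<tau>^2 - 4 * \<delta>))^2 = \<tau>^2 - 4 * \<delta>" using disc by simp_all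
  have r1: "m1^2 - \<tau> * m1 + \<delta> = 0" unfolding m1_def using sq(2)
    by (simp add: power2_eq_square field_simps)
  have r2: "m2^2 - \<tau> * m2 + \<delta> = 0" unfolding m2_def using sq(2)
    by (simp add: power2_eq_square field_simps)
  have lt: "m2 < m1" unfolding m1_def m2_def using sq(1) by simp
  have prod: "m1 * m2 = \<delta>" unfolding m1_def m2_def using sq(2)
    by (simp add: power2_eq_square field_simps)
  have dnz: "\<delta> \<noteq> 0"
  proof
    assume d0: "\<delta> = 0"
    define k11 where "k11 = fst (K ex2)"
    define k21 where "k21 = snd (K ex2)"
    define k12 where "k12 = fst (K ey2)"
    define k22 where "k22 = snd (K ey2)"
    have Kab: "K (a, b) = (a * k11 + b * k12, a * k21 + b * k22)" for a b
      using lin2v[OF K_linear, of a b] by (simp add: k11_def k21_def k12_def k22_def prod_eq_iff)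
    have d0': "k11 * k22 - k12 * k21 = 0" using d0 by (simp add: \<delta>_def k11_def k21_def k12_def k22_def)
    obtain v where v: "v \<noteq> 0" "K v = 0"
    proof (cases "(k12, -k11) = (0::R2)")
      case False
      have "K (k12, -k11) = 0" using d0' by (simp add: Kab zero_prod_def algebra_simps)
      then show ?thesis using that False by blast
    next
      case True
      show ?thesis
      proof (cases "(k22, -k21) = (0::R2)")
        case False
        have "K (k22, -k21) = 0" using d0' by (simp add: Kab zero_prod_def algebra_simps)
        then show ?thesis using that False by blast
      next
        case True2: True
        have "K ex2 = 0" using True True2 by (simp add: Kab ex2_def zero_prod_def)
        moreover have "ex2 \<noteq> 0" by (simp add: ex2_def zero_prod_def)
        ultimately show ?thesis using that by blast
      qed
    qed
    have "L (DJ 0 v) = 0" using invariance[of v] v(2) linear_0[OF DJ_linear] by simp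
    moreover obtain c1 c2 c3 c4 where X: "DJ 0 v = c1 *\<^sub>R e1 + c2 *\<^sub>R e2 + c3 *\<^sub>R e3 + c4 *\<^sub>R e4"
      using eig_span[OF L_linear ne ev dist] by blast
    moreover have "L (c1 *\<^sub>R e1 + c2 *\<^sub>R e2 + c3 *\<^sub>R e3 + c4 *\<^sub>R e4) =
       (c1*l1) *\<^sub>R e1 + (c2*l2) *\<^sub>R e2 + (c3*l3) *\<^sub>R e3 + (c4*l4) *\<^sub>R e4"
      using ev by (simp add: linear_add[OF L_linear] linear_scale[OF L_linear])
    ultimately have "(c1*l1) *\<^sub>R e1 + (c2*l2) *\<^sub>R e2 + (c3*l3) *\<^sub>R e3 + (c4*l4) *\<^sub>R e4 = 0" by simp
    then have "c1*l1 = 0 \<and> c2*l2 = 0 \<and> c3*l3 = 0 \<and> c4*l4 = 0" by (rule eig_indep[OF L_linear ne ev dist])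
    then have "DJ 0 v = 0" using X nz by simp
    then show False using DJ_inj v(1) by blast
  qed
  have nz1: "m1 \<noteq> 0" and nz2: "m2 \<noteq> 0" using prod dnz by auto
  obtain v1 where v1: "v1 \<noteq> 0" "\<forall>w. v1 \<bullet> K w = m1 * (v1 \<bullet> w)"
    using left_eig_exists[OF K_linear] disc r1 unfolding \<tau>_def \<delta>_def by blast
  obtain v2 where v2: "v2 \<noteq> 0" "\<forall>w. v2 \<bullet> K w = m2 * (v2 \<bullet> w)"
    using left_eig_exists[OF K_linear] disc r2 unfolding \<tau>_def \<delta>_def by blast
  obtain C where C: "C > 0" "\<forall>w. norm w \<le> C * (\<bar>v1 \<bullet> w\<bar> + \<bar>v2 \<bullet> w\<bar>)"
    using left_eig_bound[OF K_linear v1(1) v2(1)] v1(2) v2(2) lt by (metis order_less_irrefl)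
  show ?thesis using v1 v2 lt nz1 nz2 C by blast
qed

end

lemma abs_sum_sq: "(\<bar>x\<bar> + \<bar>y\<bar>)^2 \<le> 2 * (x^2 + y^2)" for x y :: real
proof -
  have "0 \<le> (\<bar>x\<bar> - \<bar>y\<bar>)^2" by simp
  then show ?thesis by (simp add: power2_eq_square algebra_simps abs_mult_self_eq)
qed

lemma line_deriv:
  fixes g :: "'a::real_normed_vector \<Rightarrow> real"
  assumes "(g has_derivative g') (at (x + t *\<^sub>R a))"
  shows "((\<lambda>s. g (x + s *\<^sub>R a)) has_real_derivative g' a) (at t)"
proof -
  have l: "linear g'" using assms has_derivative_linear by blast
  have p: "((\<lambda>s. x + s *\<^sub>R a) has_derivative (\<lambda>s. s *\<^sub>R a)) (at t)"
    by (auto intro!: derivative_eq_intros)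
  have "((\<lambda>s. g (x + s *\<^sub>R a)) has_derivative (\<lambda>s. g' (s *\<^sub>R a))) (at t)"
    using has_derivative_compose[OF p assms] .
  moreover have "(\<lambda>s. g' (s *\<^sub>R a)) = (\<lambda>s. s * g' a)" using linear_scale[OF l] by auto
  ultimately show ?thesis unfolding has_field_derivative_def by (simp add: mult.commute[of _ "g' a"])
qed

locale HS2 = z: HSz H z U + t: HSz H zt Ut for H z U zt Ut +
  assumes tan: "t.Z ex2 0 = z.Z ex2 0" "t.Z ey2 0 = z.Z ey2 0"
    and z00: "z 0 = 0" and zt00: "zt 0 = 0"
begin

lemma DJ_eq: "t.DJ 0 = z.DJ 0"
  by (rule ext) (simp add: t.DJ_def z.DJ_def tan)

lemma K_eq': "t.K = z.K"
  by (rule ext) (simp add: t.K_def z.K_def t.DA_def z.DA_def DJ_eq t.J0 z.J0)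

definition U0 where "U0 = U \<inter> Ut"
lemma U0: "open U0" "0 \<in> U0" using z.U t.U by (auto simp: U0_def)

definition gx where "gx w = pd zt ex2 w - pd z ex2 w"
definition gy where "gy w = pd zt ey2 w - pd z ey2 w"

lemma gx_small: "e > 0 \<Longrightarrow> \<exists>d>0. \<forall>w. norm w < d \<longrightarrow> \<bar>gx w\<bar> \<le> e * norm w"
proof -
  assume e: "e > 0"
  have "((\<lambda>w. pd zt ex2 w - pd z ex2 w) has_derivative (\<lambda>v. t.Z ex2 0 v - z.Z ex2 0 v)) (at 0)"
    using t.dzi_has[OF t.basis2(1) t.U(2)] z.dzi_has[OF z.basis2(1) z.U(2)] by (rule has_derivative_diff)
  then have "(gx has_derivative (\<lambda>v. 0)) (at 0)" by (simp add: tan gx_def[abs_def])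
  then have "\<exists>d>0. \<forall>y. norm (y - 0) < d \<longrightarrow> norm (gx y - gx 0 - 0) \<le> e * norm (y - 0)"
    using e unfolding has_derivative_at_alt by blast
  moreover have "gx 0 = 0" using t.zx0 z.zx0 by (simp add: gx_def)
  ultimately show ?thesis by simp
qed

lemma gy_small: "e > 0 \<Longrightarrow> \<exists>d>0. \<forall>w. norm w < d \<longrightarrow> \<bar>gy w\<bar> \<le> e * norm w"
proof -
  assume e: "e > 0"
  have "((\<lambda>w. pd zt ey2 w - pd z ey2 w) has_derivative (\<lambda>v. t.Z ey2 0 v - z.Z ey2 0 v)) (at 0)"
    using t.dzi_has[OF t.basis2(2) t.U(2)] z.dzi_has[OF z.basis2(2) z.U(2)] by (rule has_derivative_diff)
  then have "(gy has_derivative (\<lambda>v. 0)) (at 0)" by (simp add: tan gy_def[abs_def])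
  then have "\<exists>d>0. \<forall>y. norm (y - 0) < d \<longrightarrow> norm (gy y - gy 0 - 0) \<le> e * norm (y - 0)"
    using e unfolding has_derivative_at_alt by blast
  moreover have "gy 0 = 0" using t.zy0 z.zy0 by (simp add: gy_def)
  ultimately show ?thesis by simp
qed

definition Du where "Du w h = fst h * gx w + snd h * gy w"

lemma u_has_deriv: "w \<in> U0 \<Longrightarrow> ((\<lambda>w. zt w - z w) has_derivative Du w) (at w)"
proof -
  assume w: "w \<in> U0"
  have "((\<lambda>w. zt w - z w) has_derivative (\<lambda>h. frechet_derivative zt (at w) h - frechet_derivative z (at w) h)) (at w)"
    using t.dz[of w] z.dz[of w] w frechet_derivative_works by (auto simp: U0_def intro!: has_derivative_diff)
  moreover have "(\<lambda>h. frechet_derivative zt (at w) h - frechet_derivative z (at w) h) = Du w"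
  proof
    fix h :: R2
    obtain a b where h: "h = (a, b)" by fastforce
    have dzt: "zt differentiable (at w)" using t.dz w by (auto simp: U0_def)
    have dzz: "z differentiable (at w)" using z.dz w by (auto simp: U0_def)
    have l1: "linear (frechet_derivative zt (at w))" using dzt frechet_derivative_works has_derivative_linear by blast
    have l2: "linear (frechet_derivative z (at w))" using dzz frechet_derivative_works has_derivative_linear by blast
    show "frechet_derivative zt (at w) h - frechet_derivative z (at w) h = Du w h"
      unfolding h lin2[OF l1] lin2[OF l2] by (simp add: Du_def gx_def gy_def pd_def algebra_simps)
  qed
  ultimately show ?thesis by simp
qed

lemma u_small: "e > 0 \<Longrightarrow> \<exists>d>0. ball 0 d \<subseteq> U0 \<and> (\<forall>w\<in>ball 0 d. \<bar>zt w - z w\<bar> \<le> e * (norm w)^2)"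
proof -
  assume e: "e > 0"
  obtain d1 where d1: "d1 > 0" "\<And>w. norm w < d1 \<Longrightarrow> \<bar>gx w\<bar> \<le> (e/2) * norm w" using gx_small[of "e/2"] e by auto
  obtain d2 where d2: "d2 > 0" "\<And>w. norm w < d2 \<Longrightarrow> \<bar>gy w\<bar> \<le> (e/2) * norm w" using gy_small[of "e/2"] e by auto
  obtain d0 where d0: "d0 > 0" "ball 0 d0 \<subseteq> U0" using U0 open_contains_ball by blast
  define d where "d = min d0 (min d1 d2)"
  have d: "d > 0" "ball 0 d \<subseteq> U0" using d0 d1 d2 by (auto simp: d_def)
  have "\<bar>zt w - z w\<bar> \<le> e * (norm w)^2" if w: "w \<in> ball 0 d" for w
  proof -
    have sub: "cball 0 (norm w) \<subseteq> ball 0 d" using w by auto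
    have "norm ((zt w - z w) - (zt 0 - z 0)) \<le> (e * norm w) * norm (w - 0)"
    proof (rule differentiable_bound[where S="cball 0 (norm w)" and f'="Du"])
      show "convex (cball (0::R2) (norm w))" by (rule convex_cball)
      show "((\<lambda>w. zt w - z w) has_derivative Du x) (at x within cball 0 (norm w))" if "x \<in> cball 0 (norm w)" for x
        using u_has_deriv[of x] sub d that has_derivative_at_withinI by blast
      show "onorm (Du x) \<le> e * norm w" if x: "x \<in> cball 0 (norm w)" for x
      proof -
        have nx: "norm x \<le> norm w" "norm x < d1" "norm x < d2" using x w by (auto simp: d_def)
        have "bounded_linear (Du x)" unfolding Du_def by (auto intro!: bounded_linear_intros)
        then have "onorm (Du x) \<le> (\<Sum>i\<in>Basis. norm (Du x i))" by (rule onorm_componentwise)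
        also have "\<dots> = \<bar>gx x\<bar> + \<bar>gy x\<bar>" by (simp add: Basis_R2 Du_def ex2_def ey2_def)
        also have "\<dots> \<le> (e/2) * norm x + (e/2) * norm x" using d1(2)[OF nx(2)] d2(2)[OF nx(3)] by simp
        also have "\<dots> \<le> e * norm w" using nx(1) e by (simp add: mult_left_mono)
        finally show ?thesis .
      qed
    qed (use w in auto)
    then show ?thesis using z00 zt00 by (simp add: power2_eq_square mult.assoc)
  qed
  then show ?thesis using d by blast
qed


lemma mvt_H:
  assumes w: "w \<in> U0"
  shows "\<exists>\<theta>. 0 \<le> \<theta> \<and> \<theta> \<le> 1 \<and> z.F (jet z w + \<theta> *\<^sub>R (jet zt w - jet z w)) \<bullet> (gx w, gy w) = 0"
proof -
  define P0 where "P0 = jet z w"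
  define P1 where "P1 = jet zt w"
  have h0: "H P0 = 0" using z.zsol w unfolding solves_HJ_def P0_def U0_def by auto
  have h1: "H P1 = 0" using t.zsol w unfolding solves_HJ_def P1_def U0_def by auto
  have "\<exists>\<theta>. 0 < \<theta> \<and> \<theta> < 1 \<and> (\<lambda>s. H (P0 + s *\<^sub>R (P1 - P0))) 1 - (\<lambda>s. H (P0 + s *\<^sub>R (P1 - P0))) 0 =
      (1 - 0) * frechet_derivative H (at (P0 + \<theta> *\<^sub>R (P1 - P0))) (P1 - P0)"
  proof (rule MVT2)
    show "(0::real) < 1" by simp
    fix s :: real assume "0 \<le> s" "s \<le> 1"
    show "((\<lambda>s. H (P0 + s *\<^sub>R (P1 - P0))) has_real_derivative frechet_derivative H (at (P0 + s *\<^sub>R (P1 - P0))) (P1 - P0)) (at s)"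
      by (rule line_deriv) (use z.dH frechet_derivative_works in blast)
  qed
  then obtain \<theta> where th: "0 < \<theta>" "\<theta> < 1" "frechet_derivative H (at (P0 + \<theta> *\<^sub>R (P1 - P0))) (P1 - P0) = 0"
    using h0 h1 by auto
  have "P1 - P0 = (0, 0, gx w, gy w)" by (simp add: P0_def P1_def jet_def gx_def gy_def)
  then have "frechet_derivative H (at (P0 + \<theta> *\<^sub>R (P1 - P0))) (P1 - P0) = z.F (P0 + \<theta> *\<^sub>R (P1 - P0)) \<bullet> (gx w, gy w)"
    by (simp add: z.DH_expand z.F_def inner_prod_def algebra_simps)
  then show ?thesis using th P0_def P1_def by (intro exI[of _ \<theta>]) auto
qed

lemma approx_F:
  assumes e: "e > 0"
  shows "\<exists>d>0. \<forall>w. norm w < d \<longrightarrow> (\<forall>\<theta>\<in>{0..1}.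
     norm (z.F (jet z w + \<theta> *\<^sub>R (jet zt w - jet z w)) - z.K w) \<le> e * norm w)"
proof -
  define T where "T = z.DJ 0"
  have hT: "(jet z has_derivative T) (at 0)" using z.J_has_deriv[OF z.U(2)] by (simp add: T_def)
  have hT': "(jet zt has_derivative T) (at 0)" using t.J_has_deriv[OF t.U(2)] by (simp add: T_def DJ_eq)
  obtain BT where BT: "BT > 0" "\<And>x. norm (T x) \<le> norm x * BT"
    using bounded_linear.pos_bounded[OF has_derivative_bounded_linear[OF hT]] by blast
  have hF: "(z.F has_derivative z.DF 0) (at 0)" by (rule z.F_has_deriv)
  obtain BF where BF: "BF > 0" "\<And>x. norm (z.DF 0 x) \<le> norm x * BF"
    using bounded_linear.pos_bounded[OF has_derivative_bounded_linear[OF hF]] by blast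
  define e1 where "e1 = min 1 (e / (2 * (BF + 1)))"
  define e2 where "e2 = e / (2 * (BT + 1))"
  have e1: "e1 > 0" "e1 \<le> 1" "BF * e1 \<le> e/2" using e BF
    by (auto simp: e1_def min_def field_simps)
  have e2: "e2 > 0" "e2 * (BT + 1) = e/2" using e BT by (auto simp: e2_def field_simps)
  obtain d1 where d1: "d1 > 0" "\<And>y. norm y < d1 \<Longrightarrow> norm (jet z y - T y) \<le> e1 * norm y"
  proof -
    from hT[unfolded has_derivative_at_alt] e1(1) obtain d where "d > 0" "\<forall>y. norm (y - 0) < d \<longrightarrow> norm (jet z y - jet z 0 - T (y - 0)) \<le> e1 * norm (y - 0)"
      by blast
    then show ?thesis using that z.J0 by auto
  qed
  obtain d1' where d1': "d1' > 0" "\<And>y. norm y < d1' \<Longrightarrow> norm (jet zt y - T y) \<le> e1 * norm y"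
  proof -
    from hT'[unfolded has_derivative_at_alt] e1(1) obtain d where "d > 0" "\<forall>y. norm (y - 0) < d \<longrightarrow> norm (jet zt y - jet zt 0 - T (y - 0)) \<le> e1 * norm (y - 0)"
      by blast
    then show ?thesis using that t.J0 by auto
  qed
  obtain d2 where d2: "d2 > 0" "\<And>y. norm y < d2 \<Longrightarrow> norm (z.F y - z.DF 0 y) \<le> e2 * norm y"
  proof -
    from hF[unfolded has_derivative_at_alt] e2(1) obtain d where "d > 0" "\<forall>y. norm (y - 0) < d \<longrightarrow> norm (z.F y - z.F 0 - z.DF 0 (y - 0)) \<le> e2 * norm (y - 0)"
      by blast
    then show ?thesis using that z.F0 by auto
  qed
  define d where "d = min d1 (min d1' (d2 / (BT + 1)))"
  have d: "d > 0" using d1 d1' d2 BT by (simp add: d_def)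
  have lT: "linear T" using hT has_derivative_linear by blast
  have lF: "linear (z.DF 0)" using hF has_derivative_linear by blast
  have Kw: "z.K w = z.DF 0 (T w)" for w by (simp add: z.K_def z.DA_def T_def z.J0)
  have "norm (z.F (jet z w + \<theta> *\<^sub>R (jet zt w - jet z w)) - z.K w) \<le> e * norm w"
    if w: "norm w < d" and th: "\<theta> \<in> {0..1}" for w \<theta>
  proof -
    define \<xi> where "\<xi> = jet z w + \<theta> *\<^sub>R (jet zt w - jet z w)"
    have a1: "norm (jet z w - T w) \<le> e1 * norm w" using d1(2)[of w] w by (simp add: d_def)
    have a2: "norm (jet zt w - T w) \<le> e1 * norm w" using d1'(2)[of w] w by (simp add: d_def)
    have xi: "\<xi> - T w = (1 - \<theta>) *\<^sub>R (jet z w - T w) + \<theta> *\<^sub>R (jet zt w - T w)"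
      by (simp add: \<xi>_def algebra_simps)
    have th01: "0 \<le> \<theta>" "\<theta> \<le> 1" using th by auto
    have nxi: "norm (\<xi> - T w) \<le> e1 * norm w"
    proof -
      have "norm (\<xi> - T w) \<le> norm ((1 - \<theta>) *\<^sub>R (jet z w - T w)) + norm (\<theta> *\<^sub>R (jet zt w - T w))"
        unfolding xi by (rule norm_triangle_ineq)
      also have "\<dots> = (1 - \<theta>) * norm (jet z w - T w) + \<theta> * norm (jet zt w - T w)" using th01 by simp
      also have "\<dots> \<le> (1 - \<theta>) * (e1 * norm w) + \<theta> * (e1 * norm w)"
        using th01 a1 a2 by (intro add_mono mult_left_mono) auto
      also have "\<dots> = e1 * norm w" by (simp add: algebra_simps)
      finally show ?thesis .
    qed
    have nx: "norm \<xi> \<le> (BT + 1) * norm w"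
    proof -
      have "norm \<xi> \<le> norm (T w) + norm (\<xi> - T w)" by (metis add.commute diff_add_cancel norm_triangle_ineq)
      also have "\<dots> \<le> norm w * BT + e1 * norm w" using BT(2)[of w] nxi by simp
      also have "\<dots> \<le> (BT + 1) * norm w"
      proof -
        have "e1 * norm w \<le> 1 * norm w" using e1 by (intro mult_right_mono) auto
        then show ?thesis by (simp add: algebra_simps)
      qed
      finally show ?thesis .
    qed
    have "norm \<xi> < d2"
    proof -
      have "(BT + 1) * norm w < (BT + 1) * (d2 / (BT + 1))"
        using w BT by (intro mult_strict_left_mono) (auto simp: d_def)
      then show ?thesis using nx BT by simp
    qed
    then have b1: "norm (z.F \<xi> - z.DF 0 \<xi>) \<le> e2 * norm \<xi>" by (rule d2(2))
    have b2: "norm (z.DF 0 \<xi> - z.DF 0 (T w)) \<le> e1 * norm w * BF"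
    proof -
      have "z.DF 0 \<xi> - z.DF 0 (T w) = z.DF 0 (\<xi> - T w)" using linear_diff[OF lF] by metis
      then have "norm (z.DF 0 \<xi> - z.DF 0 (T w)) \<le> norm (\<xi> - T w) * BF" using BF(2) by simp
      also have "\<dots> \<le> e1 * norm w * BF" using nxi BF by (simp add: mult_right_mono)
      finally show ?thesis .
    qed
    have "norm (z.F \<xi> - z.K w) \<le> norm (z.F \<xi> - z.DF 0 \<xi>) + norm (z.DF 0 \<xi> - z.DF 0 (T w))"
      unfolding Kw by (metis diff_add_cancel norm_triangle_ineq add_diff_eq diff_diff_eq2)
    also have "\<dots> \<le> e2 * ((BT + 1) * norm w) + e1 * norm w * BF"
      using b1 b2 nx e2 by (smt (verit) mult_left_mono)
    also have "\<dots> = (e2 * (BT + 1)) * norm w + (BF * e1) * norm w" by (simp add: algebra_simps)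
    also have "\<dots> = (e/2) * norm w + (BF * e1) * norm w" unfolding e2(2) ..
    also have "\<dots> \<le> (e/2) * norm w + (e/2) * norm w" using mult_right_mono[OF e1(3), of "norm w"] by simp
    also have "\<dots> = e * norm w" by simp
    finally show ?thesis unfolding \<xi>_def .
  qed
  then show ?thesis using d by blast
qed


lemma uniq_half:
  assumes v1: "v1 \<noteq> 0" and v2: "v2 \<noteq> 0" and m1: "m1 < 0" and m2: "m2 < 0"
    and ev1: "\<And>w. v1 \<bullet> z.K w = m1 * (v1 \<bullet> w)" and ev2: "\<And>w. v2 \<bullet> z.K w = m2 * (v2 \<bullet> w)"
    and C: "C > 0" and Cb: "\<And>w. norm w \<le> C * (\<bar>v1 \<bullet> w\<bar> + \<bar>v2 \<bullet> w\<bar>)"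
  shows "\<exists>r>0. \<forall>w. (v1 \<bullet> w)^2 + (v2 \<bullet> w)^2 \<le> r \<longrightarrow> w \<in> U0 \<and> zt w \<le> z w"
proof -
  define V where "V w = (v1 \<bullet> w)^2 + (v2 \<bullet> w)^2" for w
  define DV where "DV w h = 2 * (v1 \<bullet> w) * (v1 \<bullet> h) + 2 * (v2 \<bullet> w) * (v2 \<bullet> h)" for w h
  define M where "M = norm v1 + norm v2"
  define m where "m = min (- m1) (- m2)"
  have mpos: "m > 0" using m1 m2 by (simp add: m_def)
  have Mpos: "M > 0" using v1 by (simp add: M_def add_pos_nonneg)
  have Vlow: "(norm w)^2 \<le> 2 * C^2 * V w" for w
  proof -
    have "norm w \<le> C * (\<bar>v1 \<bullet> w\<bar> + \<bar>v2 \<bullet> w\<bar>)" by (rule Cb)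
    then have "(norm w)^2 \<le> (C * (\<bar>v1 \<bullet> w\<bar> + \<bar>v2 \<bullet> w\<bar>))^2" by (intro power_mono) auto
    also have "\<dots> = C^2 * (\<bar>v1 \<bullet> w\<bar> + \<bar>v2 \<bullet> w\<bar>)^2" by (simp add: power_mult_distrib)
    also have "\<dots> \<le> C^2 * (2 * V w)"
    proof (intro mult_left_mono)
      have "(\<bar>v1 \<bullet> w\<bar> + \<bar>v2 \<bullet> w\<bar>)^2 \<le> 2 * ((v1 \<bullet> w)^2 + (v2 \<bullet> w)^2)" by (rule abs_sum_sq)
      then show "(\<bar>v1 \<bullet> w\<bar> + \<bar>v2 \<bullet> w\<bar>)^2 \<le> 2 * V w" by (simp add: V_def)
    qed simp
    finally show ?thesis by simp
  qed
  have Vpos: "V w > 0" if "w \<noteq> 0" for w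
  proof -
    have "(norm w)^2 > 0" using that by simp
    then have "2 * C^2 * V w > 0" using Vlow[of w] by linarith
    then show ?thesis using C by (simp add: zero_less_mult_iff)
  qed
  have V0: "V 0 = 0" by (simp add: V_def)
  have V_deriv: "(V has_derivative DV w) (at w)" for w
    unfolding V_def[abs_def] DV_def[abs_def]
    by (auto intro!: derivative_eq_intros simp: power2_eq_square algebra_simps)
  have Vcont: "continuous_on UNIV V" unfolding V_def[abs_def] by (intro continuous_intros)
  define \<epsilon> where "\<epsilon> = m / (4 * M * C)"
  have \<epsilon>: "\<epsilon> > 0" using mpos Mpos C by (simp add: \<epsilon>_def)
  obtain da where da: "da > 0" "\<And>w \<theta>. norm w < da \<Longrightarrow> \<theta>\<in>{0..1} \<Longrightarrow>
     norm (z.F (jet z w + \<theta> *\<^sub>R (jet zt w - jet z w)) - z.K w) \<le> \<epsilon> * norm w"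
    using approx_F[OF \<epsilon>] by blast
  obtain d0 where d0: "d0 > 0" "ball 0 d0 \<subseteq> U0" using U0 open_contains_ball by blast
  define d where "d = min da d0"
  have d: "d > 0" using da d0 by (simp add: d_def)
  define r where "r = d^2 / (4 * C^2)"
  have r: "r > 0" using d C by (simp add: r_def)
  have inball: "norm w < d" if "V w \<le> r" for w
  proof -
    have "2 * C^2 * V w \<le> 2 * C^2 * r" using that C by (intro mult_left_mono) auto
    then have "(norm w)^2 \<le> 2 * C^2 * r" using Vlow[of w] by linarith
    also have "\<dots> = d^2 / 2" using C by (simp add: r_def field_simps)
    also have "\<dots> < d^2" using d by simp
    finally have "(norm w)^2 < d^2" .
    then show ?thesis using d by (simp add: power_less_imp_less_base)
  qed
  have inU0: "w \<in> U0" if "V w \<le> r" for w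
    using inball[OF that] d0 by (auto simp: d_def)
  define S where "S = {w. V w \<le> r}"
  have Sc: "compact S"
  unfolding compact_eq_bounded_closed
  proof
    show "bounded S" unfolding bounded_iff S_def using inball by (meson less_imp_le mem_Collect_eq)
    show "closed S" unfolding S_def using closed_Collect_le[OF Vcont continuous_on_const] .
  qed
  have S0: "0 \<in> S" using r by (simp add: S_def V0)
  define \<phi> where "\<phi> w = (zt w - z w) / V w" for w
  have ucont: "isCont (\<lambda>w. zt w - z w) w" if "w \<in> U0" for w
    using u_has_deriv[OF that] has_derivative_continuous by blast
  have phicont: "isCont \<phi> w" if "w \<in> S" for w
  proof (cases "w = 0")
    case False
    have c1: "isCont (\<lambda>w. zt w - z w) w" using ucont inU0 that by (simp add: S_def)
    have c2: "isCont V w" using Vcont continuous_on_eq_continuous_at open_UNIV by blast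
    have c3: "V w \<noteq> 0" using Vpos[OF False] by simp
    have "isCont (\<lambda>w. (zt w - z w) / V w) w" using c1 c2 c3 by (rule isCont_divide)
    then show ?thesis by (simp add: \<phi>_def[abs_def])
  next
    case True
    show ?thesis unfolding True continuous_at_eps_delta
    proof (intro allI impI)
      fix e :: real assume e: "e > 0"
      obtain du where du: "du > 0" "ball 0 du \<subseteq> U0" "\<And>w. w \<in> ball 0 du \<Longrightarrow> \<bar>zt w - z w\<bar> \<le> (e / (4 * C^2)) * (norm w)^2"
        using u_small[of "e / (4 * C^2)"] e C by auto
      show "\<exists>d>0. \<forall>x'. dist x' 0 < d \<longrightarrow> dist (\<phi> x') (\<phi> 0) < e"
      proof (intro exI[of _ du] conjI allI impI)
        show "du > 0" by (rule du(1))
        fix x :: R2 assume x: "dist x 0 < du"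
        have p0: "\<phi> 0 = 0" by (simp add: \<phi>_def V0)
        show "dist (\<phi> x) (\<phi> 0) < e"
        proof (cases "x = 0")
          case True then show ?thesis using e p0 by simp
        next
          case False
          have Vx: "V x > 0" using Vpos False by simp
          have ux: "\<bar>zt x - z x\<bar> \<le> (e / (4 * C^2)) * (norm x)^2" using du(3) x by simp
          also have "\<dots> \<le> (e / (4 * C^2)) * (2 * C^2 * V x)" using Vlow[of x] e C by (intro mult_left_mono) auto
          also have "\<dots> = (e/2) * V x" using C by (simp add: field_simps)
          finally have "\<bar>\<phi> x\<bar> \<le> e/2" using Vx by (simp add: \<phi>_def abs_divide pos_divide_le_eq)
          then show ?thesis using p0 e by simp
        qed
      qed
    qed
  qed
  obtain w0 where w0: "w0 \<in> S" "\<And>w. w \<in> S \<Longrightarrow> \<phi> w \<le> \<phi> w0"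
    using continuous_attains_sup[OF Sc _ continuous_at_imp_continuous_on] S0 phicont by blast
  have main: "\<phi> w0 \<le> 0"
  proof (rule ccontr)
    assume "\<not> \<phi> w0 \<le> 0"
    then have pw0: "\<phi> w0 > 0" by simp
    have w0ne: "w0 \<noteq> 0" using pw0 by (auto simp: \<phi>_def V0)
    have Vw0: "V w0 > 0" using Vpos[OF w0ne] .
    have uw0: "zt w0 - z w0 > 0" using pw0 Vw0 by (simp add: \<phi>_def zero_less_divide_iff)
    have w0U: "w0 \<in> U0" using inU0 w0(1) by (simp add: S_def)
    have nw0: "norm w0 < da" using inball w0(1) by (simp add: S_def d_def)
    obtain \<theta> where th: "0 \<le> \<theta>" "\<theta> \<le> 1" "z.F (jet z w0 + \<theta> *\<^sub>R (jet zt w0 - jet z w0)) \<bullet> (gx w0, gy w0) = 0"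
      using mvt_H[OF w0U] by blast
    define a where "a = z.F (jet z w0 + \<theta> *\<^sub>R (jet zt w0 - jet z w0))"
    define rr where "rr = a - z.K w0"
    have rr: "norm rr \<le> \<epsilon> * norm w0" using da(2)[OF nw0, of \<theta>] th by (simp add: rr_def a_def)
    have Du0: "Du w0 a = 0" using th(3) by (simp add: Du_def a_def inner_prod_def)
    have DVneg: "DV w0 a < 0"
    proof -
      define u1 where "u1 = v1 \<bullet> w0"
      define u2 where "u2 = v2 \<bullet> w0"
      have a_eq: "a = z.K w0 + rr" by (simp add: rr_def)
      have i1: "v1 \<bullet> a = m1 * u1 + v1 \<bullet> rr" by (simp add: a_eq inner_add_right ev1 u1_def)
      have i2: "v2 \<bullet> a = m2 * u2 + v2 \<bullet> rr" by (simp add: a_eq inner_add_right ev2 u2_def)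
      have DVe: "DV w0 a = 2*m1*u1^2 + 2*m2*u2^2 + 2*u1*(v1 \<bullet> rr) + 2*u2*(v2 \<bullet> rr)"
        by (simp add: DV_def i1 i2 u1_def u2_def power2_eq_square algebra_simps)
      have q1: "2*m1*u1^2 + 2*m2*u2^2 \<le> -2*m*(u1^2 + u2^2)"
      proof -
        have mm: "m1 \<le> -m" "m2 \<le> -m" by (auto simp: m_def)
        have "m1*u1^2 \<le> (-m)*u1^2" using mult_right_mono[OF mm(1), of "u1^2"] by simp
        moreover have "m2*u2^2 \<le> (-m)*u2^2" using mult_right_mono[OF mm(2), of "u2^2"] by simp
        ultimately show ?thesis by (simp add: algebra_simps)
      qed
      have nr: "norm rr \<le> \<epsilon> * C * (\<bar>u1\<bar> + \<bar>u2\<bar>)"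
      proof -
        have "norm rr \<le> \<epsilon> * norm w0" by (rule rr)
        also have "\<dots> \<le> \<epsilon> * (C * (\<bar>u1\<bar> + \<bar>u2\<bar>))" using Cb[of w0] \<epsilon> by (intro mult_left_mono) (auto simp: u1_def u2_def)
        finally show ?thesis by (simp add: mult.assoc)
      qed
      have err: "\<bar>2*u1*(v1 \<bullet> rr) + 2*u2*(v2 \<bullet> rr)\<bar> \<le> 2 * M * norm rr * (\<bar>u1\<bar> + \<bar>u2\<bar>)"
      proof -
        have a1: "\<bar>v1 \<bullet> rr\<bar> \<le> norm v1 * norm rr" by (rule Cauchy_Schwarz_ineq2)
        have a2: "\<bar>v2 \<bullet> rr\<bar> \<le> norm v2 * norm rr" by (rule Cauchy_Schwarz_ineq2)
        have "\<bar>2*u1*(v1 \<bullet> rr) + 2*u2*(v2 \<bullet> rr)\<bar> \<le> \<bar>2*u1*(v1 \<bullet> rr)\<bar> + \<bar>2*u2*(v2 \<bullet> rr)\<bar>"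
          by (rule abs_triangle_ineq)
        also have "\<dots> = 2*\<bar>u1\<bar>*\<bar>v1 \<bullet> rr\<bar> + 2*\<bar>u2\<bar>*\<bar>v2 \<bullet> rr\<bar>" by (simp add: abs_mult)
        also have "\<dots> \<le> 2*\<bar>u1\<bar>*(M * norm rr) + 2*\<bar>u2\<bar>*(M * norm rr)"
        proof -
          have "norm v1 * norm rr \<le> M * norm rr" "norm v2 * norm rr \<le> M * norm rr"
            by (auto simp: M_def intro!: mult_right_mono)
          then show ?thesis using a1 a2
            by (intro add_mono mult_left_mono) auto
        qed
        also have "\<dots> = 2 * M * norm rr * (\<bar>u1\<bar> + \<bar>u2\<bar>)" by (simp add: algebra_simps)
        finally show ?thesis .
      qed
      have err2: "2 * M * norm rr * (\<bar>u1\<bar> + \<bar>u2\<bar>) \<le> m * (u1^2 + u2^2)"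
      proof -
        have "2 * M * norm rr * (\<bar>u1\<bar> + \<bar>u2\<bar>) \<le> 2 * M * (\<epsilon> * C * (\<bar>u1\<bar> + \<bar>u2\<bar>)) * (\<bar>u1\<bar> + \<bar>u2\<bar>)"
          using nr Mpos by (intro mult_right_mono mult_left_mono) auto
        also have "\<dots> = (m/2) * (\<bar>u1\<bar> + \<bar>u2\<bar>)^2" using Mpos C by (simp add: \<epsilon>_def power2_eq_square field_simps)
        also have "\<dots> \<le> (m/2) * (2 * (u1^2 + u2^2))"
        proof (intro mult_left_mono)
          show "(\<bar>u1\<bar> + \<bar>u2\<bar>)^2 \<le> 2 * (u1^2 + u2^2)" by (rule abs_sum_sq)
        qed (use mpos in simp)
        also have "\<dots> = m * (u1^2 + u2^2)" by simp
        finally show ?thesis .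
      qed
      have "V w0 = u1^2 + u2^2" by (simp add: V_def u1_def u2_def)
      then have "u1^2 + u2^2 > 0" using Vw0 by simp
      then have "m * (u1^2 + u2^2) > 0" using mpos by simp
      then show ?thesis using DVe q1 err err2 unfolding abs_le_iff by (simp add: algebra_simps)
    qed
    define \<psi> where "\<psi> t = (zt (w0 + t *\<^sub>R a) - z (w0 + t *\<^sub>R a)) / V (w0 + t *\<^sub>R a)" for t
    have dpsi: "(\<psi> has_real_derivative (Du w0 a * V w0 - (zt w0 - z w0) * DV w0 a) / (V w0 * V w0)) (at 0)"
    proof -
      have h1: "((\<lambda>t. zt (w0 + t *\<^sub>R a) - z (w0 + t *\<^sub>R a)) has_real_derivative Du w0 a) (at 0)"
        using line_deriv[of "\<lambda>w. zt w - z w" "Du w0" w0 0 a] u_has_deriv[OF w0U] by simp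
      have h2: "((\<lambda>t. V (w0 + t *\<^sub>R a)) has_real_derivative DV w0 a) (at 0)"
        using line_deriv[of V "DV w0" w0 0 a] V_deriv[of w0] by simp
      show ?thesis unfolding \<psi>_def[abs_def] using DERIV_divide[OF h1 h2] Vw0 by simp
    qed
    have num: "(zt w0 - z w0) * DV w0 a < 0" using uw0 DVneg by (simp add: mult_pos_neg)
    have "(Du w0 a * V w0 - (zt w0 - z w0) * DV w0 a) / (V w0 * V w0) > 0"
    proof -
      have "V w0 * V w0 > 0" using Vw0 by simp
      then have "(zt w0 - z w0) * DV w0 a / (V w0 * V w0) < 0" using num by (simp add: divide_neg_pos)
      then show ?thesis using Du0 by simp
    qed
    then obtain e1 where e1: "e1 > 0" "\<And>h. h > 0 \<Longrightarrow> h < e1 \<Longrightarrow> \<psi> 0 < \<psi> (0 + h)"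
      using DERIV_pos_inc_right[OF dpsi] by blast
    have h2: "((\<lambda>t. V (w0 + t *\<^sub>R a)) has_real_derivative DV w0 a) (at 0)"
      using line_deriv[of V "DV w0" w0 0 a] V_deriv[of w0] by simp
    obtain e2 where e2: "e2 > 0" "\<And>h. h > 0 \<Longrightarrow> h < e2 \<Longrightarrow> V (w0 + 0 *\<^sub>R a) > V (w0 + (0 + h) *\<^sub>R a)"
      using DERIV_neg_dec_right[OF h2 DVneg] by blast
    define h where "h = min e1 e2 / 2"
    have h: "h > 0" "h < e1" "h < e2" using e1 e2 by (auto simp: h_def)
    have "V (w0 + h *\<^sub>R a) < V w0" using e2(2)[OF h(1) h(3)] by simp
    then have inS: "w0 + h *\<^sub>R a \<in> S" using w0(1) by (simp add: S_def)
    have "\<phi> w0 < \<phi> (w0 + h *\<^sub>R a)" using e1(2)[OF h(1) h(2)] by (simp add: \<psi>_def \<phi>_def)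
    then show False using w0(2)[OF inS] by simp
  qed
  have "zt w \<le> z w" if "V w \<le> r" for w
  proof (cases "w = 0")
    case True then show ?thesis using z00 zt00 by simp
  next
    case False
    have "\<phi> w \<le> 0" using w0(2)[of w] main that by (simp add: S_def)
    then show ?thesis using Vpos[OF False] by (simp add: \<phi>_def divide_le_0_iff)
  qed
  then show ?thesis using r inU0 unfolding V_def by blast
qed

end

lemma pos_persist:
  fixes f f' :: "real \<Rightarrow> real"
  assumes cont: "continuous_on {0..} f"
    and der: "\<And>t. t > 0 \<Longrightarrow> (f has_real_derivative f' t) (at t)"
    and pos: "\<And>t. t > 0 \<Longrightarrow> f t > 0 \<Longrightarrow> f' t \<ge> 0"
    and f0: "f 0 > 0" and T: "T \<ge> 0"
  shows "f T \<ge> f 0"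
proof -
  have mono: "f 0 \<le> f b" if b: "0 \<le> b" "\<And>t. 0 < t \<Longrightarrow> t < b \<Longrightarrow> f t > 0" for b
  proof (rule DERIV_nonneg_imp_increasing_open[OF b(1)])
    show "continuous_on {0..b} f" using cont by (rule continuous_on_subset) auto
    fix x :: real assume "0 < x" "x < b"
    then show "\<exists>y. DERIV f x :> y \<and> 0 \<le> y" using der pos b(2) by blast
  qed
  define Z where "Z = {t \<in> {0..T}. f t \<le> 0}"
  show ?thesis
  proof (cases "Z = {}")
    case True
    have "f t > 0" if "0 < t" "t < T" for t
    proof (rule ccontr)
      assume "\<not> f t > 0"
      then have "t \<in> Z" using that by (auto simp: Z_def)
      then show False using True by blast
    qed
    then show ?thesis using mono[OF T] by blast
  next
    case False
    have cZ: "closed Z"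
    proof -
      have "continuous_on {0..T} f" using cont by (rule continuous_on_subset) auto
      then have "closed ({0..T} \<inter> f -` {..0})"
        by (rule continuous_closed_preimage) auto
      moreover have "{0..T} \<inter> f -` {..0} = Z" by (auto simp: Z_def)
      ultimately show ?thesis by simp
    qed
    have bZ: "bdd_below Z" by (auto simp: Z_def bdd_below_def)
    define z where "z = Inf Z"
    have zZ: "z \<in> Z" using closed_contains_Inf[OF False bZ cZ] by (simp add: z_def)
    have "\<And>t. 0 < t \<Longrightarrow> t < z \<Longrightarrow> f t > 0"
    proof (rule ccontr)
      fix t assume t: "0 < t" "t < z" "\<not> f t > 0"
      then have "t \<in> Z" using zZ by (auto simp: Z_def)
      then have "z \<le> t" using bZ by (simp add: z_def cInf_lower)
      then show False using t by simp
    qed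
    then have "f 0 \<le> f z" using mono zZ by (auto simp: Z_def)
    then show ?thesis using zZ f0 by (auto simp: Z_def)
  qed
qed

lemma lin_growth:
  fixes f f' :: "real \<Rightarrow> real"
  assumes cont: "continuous_on {0..} f"
    and der: "\<And>t. t > 0 \<Longrightarrow> (f has_real_derivative f' t) (at t)"
    and lb: "\<And>t. t > 0 \<Longrightarrow> f' t \<ge> c" and T: "T \<ge> 0"
  shows "f T \<ge> f 0 + c * T"
proof -
  have "(\<lambda>t. f t - c * t) 0 \<le> (\<lambda>t. f t - c * t) T"
  proof (rule DERIV_nonneg_imp_increasing_open[OF T])
    show "continuous_on {0..T} (\<lambda>t. f t - c * t)"
      using cont by (intro continuous_intros) (auto intro: continuous_on_subset)
    fix x :: real assume x: "0 < x" "x < T"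
    have "((\<lambda>t. f t - c * t) has_real_derivative f' x - c) (at x)"
      using der[of x] x by (auto intro!: derivative_eq_intros)
    then show "\<exists>y. ((\<lambda>t. f t - c * t) has_real_derivative y) (at x) \<and> 0 \<le> y" using lb[of x] x by auto
  qed
  then show ?thesis by simp
qed

lemma vec_chain:
  fixes g :: "'a::real_normed_vector \<Rightarrow> real"
  assumes "(\<gamma> has_vector_derivative \<gamma>') (at t)" and "(g has_derivative g') (at (\<gamma> t))"
  shows "((\<lambda>s. g (\<gamma> s)) has_real_derivative g' \<gamma>') (at t)"
proof -
  have l: "linear g'" using assms(2) has_derivative_linear by blast
  have "((\<lambda>s. g (\<gamma> s)) has_derivative (\<lambda>x. g' (x *\<^sub>R \<gamma>'))) (at t)"
    using has_derivative_compose[OF assms(1)[unfolded has_vector_derivative_def] assms(2)] .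
  moreover have "(\<lambda>x. g' (x *\<^sub>R \<gamma>')) = (\<lambda>x. x * g' \<gamma>')" using linear_scale[OF l] by auto
  ultimately show ?thesis unfolding has_field_derivative_def by (simp add: mult.commute[of _ "g' \<gamma>'"])
qed

lemma deriv_within_ge0_at:
  assumes "(f has_vector_derivative f') (at t within {0..})" "t > 0"
  shows "(f has_vector_derivative f') (at t)"
proof -
  have "t \<in> interior {0::real..}" using assms(2) by simp
  then have "at t within {0..} = at t" by (rule at_within_interior)
  then show ?thesis using assms(1) by simp
qed

lemma cont_from_deriv_within:
  assumes "\<And>t. t \<ge> 0 \<Longrightarrow> (f has_vector_derivative f' t) (at t within {0..})"
  shows "continuous_on {0..} f"
  using assms has_vector_derivative_continuous continuous_on_eq_continuous_within
  by (metis atLeast_iff)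

lemma gronwall_dist:
  fixes \<gamma> \<gamma>2 :: "real \<Rightarrow> 'a::real_inner" and X :: "'a \<Rightarrow> 'a"
  assumes c1: "continuous_on {0..} \<gamma>" and c2: "continuous_on {0..} \<gamma>2"
    and d1: "\<And>t. t > 0 \<Longrightarrow> (\<gamma> has_vector_derivative X (\<gamma> t)) (at t)"
    and d2: "\<And>t. t > 0 \<Longrightarrow> (\<gamma>2 has_vector_derivative X (\<gamma>2 t)) (at t)"
    and lip: "\<And>t. 0 \<le> t \<Longrightarrow> t \<le> T \<Longrightarrow> norm (X (\<gamma> t) - X (\<gamma>2 t)) \<le> Lx * norm (\<gamma> t - \<gamma>2 t)"
    and Lx: "Lx \<ge> 0" and T: "T \<ge> 0"
  shows "norm (\<gamma> 0 - \<gamma>2 0) \<le> exp (Lx * T) * norm (\<gamma> T - \<gamma>2 T)"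
proof -
  define \<phi> where "\<phi> t = exp (2 * Lx * t) * ((\<gamma> t - \<gamma>2 t) \<bullet> (\<gamma> t - \<gamma>2 t))" for t
  have "\<phi> 0 \<le> \<phi> T"
  proof (rule DERIV_nonneg_imp_increasing_open[OF T])
    show "continuous_on {0..T} \<phi>" unfolding \<phi>_def
      using c1 c2 by (intro continuous_intros) (auto intro: continuous_on_subset)
    fix t :: real assume t: "0 < t" "t < T"
    define D where "D = \<gamma> t - \<gamma>2 t"
    define D' where "D' = X (\<gamma> t) - X (\<gamma>2 t)"
    have dD: "((\<lambda>s. \<gamma> s - \<gamma>2 s) has_vector_derivative D') (at t)"
      unfolding D'_def using d1[OF t(1)] d2[OF t(1)] by (rule has_vector_derivative_diff)
    have dq: "((\<lambda>s. (\<gamma> s - \<gamma>2 s) \<bullet> (\<gamma> s - \<gamma>2 s)) has_real_derivative 2 * (D \<bullet> D')) (at t)"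
    proof -
      have "((\<lambda>x. x \<bullet> x) has_derivative (\<lambda>h. D \<bullet> h + h \<bullet> D)) (at D)"
        by (auto intro!: derivative_eq_intros)
      from vec_chain[OF dD this[unfolded D_def]] show ?thesis by (simp add: D_def inner_commute)
    qed
    have de: "((\<lambda>s. exp (2 * Lx * s)) has_real_derivative exp (2 * Lx * t) * (2 * Lx)) (at t)"
      by (auto intro!: derivative_eq_intros)
    have dphi: "(\<phi> has_real_derivative exp (2 * Lx * t) * (2 * Lx) * (D \<bullet> D) + exp (2 * Lx * t) * (2 * (D \<bullet> D'))) (at t)"
      unfolding \<phi>_def using DERIV_mult[OF de dq] by (simp add: D_def mult.commute)
    have "\<bar>D \<bullet> D'\<bar> \<le> norm D * norm D'" by (rule Cauchy_Schwarz_ineq2)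
    also have "\<dots> \<le> norm D * (Lx * norm D)" using lip[of t] t by (intro mult_left_mono) (auto simp: D_def D'_def)
    also have "\<dots> = Lx * (D \<bullet> D)" by (simp add: power2_norm_eq_inner[symmetric] power2_eq_square)
    finally have "Lx * (D \<bullet> D) + D \<bullet> D' \<ge> 0" by linarith
    then have "exp (2 * Lx * t) * (2 * Lx) * (D \<bullet> D) + exp (2 * Lx * t) * (2 * (D \<bullet> D')) \<ge> 0"
      by (simp add: algebra_simps mult_nonneg_nonneg)
       (metis (no_types, lifting) distrib_left exp_gt_zero less_eq_real_def mult_nonneg_nonneg mult.commute mult.left_commute zero_le_numeral)
    then show "\<exists>y. DERIV \<phi> t :> y \<and> 0 \<le> y" using dphi by blast
  qed
  then have "norm (\<gamma> 0 - \<gamma>2 0)^2 \<le> exp (2 * Lx * T) * norm (\<gamma> T - \<gamma>2 T)^2"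
    by (simp add: \<phi>_def power2_norm_eq_inner)
  also have "\<dots> = (exp (Lx * T) * norm (\<gamma> T - \<gamma>2 T))^2"
    by (simp add: power_mult_distrib exp_double[symmetric] power2_eq_square[of "exp _"] mult.assoc)
  finally show ?thesis by (rule power2_le_imp_le) simp
qed


lemma neg_inv_lip:
  fixes \<Phi> :: "'a::euclidean_space \<Rightarrow> 'a"
  assumes neg: "negligible (\<Phi> ` E)" and lip: "\<And>p p'. p \<in> E \<Longrightarrow> p' \<in> E \<Longrightarrow> norm (p - p') \<le> L * norm (\<Phi> p - \<Phi> p')"
  shows "negligible E"
proof -
  have inj: "inj_on \<Phi> E"
  proof (rule inj_onI)
    fix p p' assume "p \<in> E" "p' \<in> E" "\<Phi> p = \<Phi> p'"
    then show "p = p'" using lip[of p p'] by simp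
  qed
  define g where "g = inv_into E \<Phi>"
  have "negligible (g ` (\<Phi> ` E))"
  proof (rule negligible_locally_Lipschitz_image)
    show "DIM('a) \<le> DIM('a)" by simp
    show "negligible (\<Phi> ` E)" by (rule neg)
    fix y assume y: "y \<in> \<Phi> ` E"
    show "\<exists>T B. open T \<and> y \<in> T \<and> (\<forall>y'\<in>\<Phi> ` E \<inter> T. norm (g y' - g y) \<le> B * norm (y' - y))"
    proof (intro exI[of _ UNIV] exI[of _ L] conjI ballI)
      fix y' assume "y' \<in> \<Phi> ` E \<inter> UNIV"
      then obtain p' where p': "p' \<in> E" "y' = \<Phi> p'" by auto
      obtain p where p: "p \<in> E" "y = \<Phi> p" using y by auto
      have "g y' = p'" "g y = p" using inj p p' by (simp_all add: g_def)
      then show "norm (g y' - g y) \<le> L * norm (y' - y)" using lip[OF p'(1) p(1)] p p' by simp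
    qed auto
  qed
  moreover have "g ` (\<Phi> ` E) = E" using inj by (simp add: g_def inv_into_image_cancel)
  ultimately show ?thesis by simp
qed

lemma neg_graph:
  fixes \<Gamma> :: "R2 set"
  assumes lip: "\<And>x y. x \<in> \<Gamma> \<Longrightarrow> y \<in> \<Gamma> \<Longrightarrow> norm (x - y) \<le> L * \<bar>v \<bullet> x - v \<bullet> y\<bar>"
  shows "negligible \<Gamma>"
proof (rule neg_inv_lip[where \<Phi>="\<lambda>x. (v \<bullet> x, 0)" and L=L])
  have "negligible {p::R2. (0,1) \<bullet> p = 0}" by (rule negligible_hyperplane) (simp add: zero_prod_def)
  moreover have "(\<lambda>x. (v \<bullet> x, 0::real)) ` \<Gamma> \<subseteq> {p::R2. (0,1) \<bullet> p = 0}" by (auto simp: inner_prod_def)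
  ultimately show "negligible ((\<lambda>x. (v \<bullet> x, 0::real)) ` \<Gamma>)" using negligible_subset by blast
  fix p p' assume "p \<in> \<Gamma>" "p' \<in> \<Gamma>"
  then show "norm (p - p') \<le> L * norm ((v \<bullet> p, 0::real) - (v \<bullet> p', 0))" using lip[of p p'] by simp
qed

context HSz
begin

lemma isCont_D2J: "k \<in> Basis \<Longrightarrow> j \<in> Basis \<Longrightarrow> isCont (\<lambda>x. D2 k (jet z x) j) 0"
proof -
  assume k: "k \<in> Basis" and j: "j \<in> Basis"
  have "isCont (jet z) 0" using J_has_deriv[OF U(2)] has_derivative_continuous by blast
  moreover have "isCont (\<lambda>P. D2 k P j) (jet z 0)" using cHij[OF k j] continuous_on_eq_continuous_at by blast
  ultimately show ?thesis by (rule isCont_o2)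
qed

lemma isCont_DA: "i \<in> Basis \<Longrightarrow> isCont (\<lambda>x. frechet_derivative A (at x) i) 0"
proof -
  assume i: "i \<in> Basis"
  have ev: "eventually (\<lambda>x. frechet_derivative A (at x) i = DA x i) (nhds 0)"
  proof -
    have "eventually (\<lambda>x. x \<in> U) (nhds 0)" using U eventually_nhds_in_open by blast
    then show ?thesis
    proof (rule eventually_mono)
      fix x assume "x \<in> U"
      then show "frechet_derivative A (at x) i = DA x i" using A_has_deriv frechet_derivative_at by metis
    qed
  qed
  have expand: "DA x i = (fst i * D2 ep4 (jet z x) ex4 + snd i * D2 ep4 (jet z x) ey4 + Z ex2 x i * D2 ep4 (jet z x) ep4 + Z ey2 x i * D2 ep4 (jet z x) eq4,
                         fst i * D2 eq4 (jet z x) ex4 + snd i * D2 eq4 (jet z x) ey4 + Z ex2 x i * D2 eq4 (jet z x) ep4 + Z ey2 x i * D2 eq4 (jet z x) eq4)" for x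
    unfolding DA_def DF_def DJ_def
    using lin4[OF D2_linear[OF basis4(3)]] lin4[OF D2_linear[OF basis4(4)]] by simp
  have "isCont (\<lambda>x. DA x i) 0"
    unfolding expand
    using isCont_D2J[OF basis4(3)] isCont_D2J[OF basis4(4)] isCont_Z[OF basis2(1) i] isCont_Z[OF basis2(2) i] basis4
    by (intro continuous_intros) auto
  then show ?thesis using isCont_cong[OF ev] by blast
qed

lemma A_lin:
  assumes e: "e > 0"
  shows "\<exists>d>0. ball 0 d \<subseteq> U \<and> (\<forall>x\<in>ball 0 d. \<forall>y\<in>ball 0 d. norm (A x - A y - K (x - y)) \<le> e * norm (x - y))"
proof -
  have fK: "frechet_derivative A (at 0) = K" using A_has_deriv[OF U(2)] frechet_derivative_at K_def by metis
  have "\<exists>d>0. ball 0 d \<subseteq> U \<and> (\<forall>x\<in>ball 0 d. \<forall>y\<in>ball 0 d. norm (A x - A y - frechet_derivative A (at 0) (x - y)) \<le> e * norm (x - y))"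
    by (rule local_linearization[OF U(1) U(2) _ isCont_DA e]) (use A_has_deriv differentiable_def in blast)
  then show ?thesis unfolding fK .
qed


lemma cone:
  assumes v1: "v1 \<noteq> 0" and v2: "v2 \<noteq> 0" and m12: "m2 < m1" and m1: "0 < m1"
    and ev1: "\<And>w. v1 \<bullet> K w = m1 * (v1 \<bullet> w)" and ev2: "\<And>w. v2 \<bullet> K w = m2 * (v2 \<bullet> w)"
    and C: "C > 0" and Cb: "\<And>w. norm w \<le> C * (\<bar>v1 \<bullet> w\<bar> + \<bar>v2 \<bullet> w\<bar>)"
  shows "\<exists>\<rho>>0. cball 0 \<rho> \<subseteq> U \<and> (\<forall>q q'. continuous_on {0..} q \<longrightarrow> continuous_on {0..} q' \<longrightarrow>
     (\<forall>t>0. (q has_vector_derivative A (q t)) (at t)) \<longrightarrow> (\<forall>t>0. (q' has_vector_derivative A (q' t)) (at t)) \<longrightarrow>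
     (\<forall>t\<ge>0. q t \<in> cball 0 \<rho> \<and> q' t \<in> cball 0 \<rho>) \<longrightarrow> (v1 \<bullet> (q 0 - q' 0))^2 \<le> (v2 \<bullet> (q 0 - q' 0))^2)"
proof -
  define c0 where "c0 = m1 - max m2 0"
  have c0: "c0 > 0" using m12 m1 by (simp add: c0_def)
  define M where "M = norm v1 + norm v2"
  have Mpos: "M > 0" using v1 by (simp add: M_def add_pos_nonneg)
  define \<epsilon> where "\<epsilon> = c0 / (8 * M * C)"
  have \<epsilon>: "\<epsilon> > 0" using c0 Mpos C by (simp add: \<epsilon>_def)
  obtain d where d: "d > 0" "ball 0 d \<subseteq> U" "\<And>x y. x\<in>ball 0 d \<Longrightarrow> y\<in>ball 0 d \<Longrightarrow> norm (A x - A y - K (x - y)) \<le> \<epsilon> * norm (x - y)"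
    using A_lin[OF \<epsilon>] by blast
  define \<rho> where "\<rho> = d / 2"
  have \<rho>: "\<rho> > 0" "cball 0 \<rho> \<subseteq> ball 0 d" using d by (auto simp: \<rho>_def)
  have lK: "linear K" by (rule K_linear)
  have key: "(v1 \<bullet> (q 0 - q' 0))^2 \<le> (v2 \<bullet> (q 0 - q' 0))^2"
    if cq: "continuous_on {0..} q" and cq': "continuous_on {0..} q'"
      and dq: "\<forall>t>0. (q has_vector_derivative A (q t)) (at t)" and dq': "\<forall>t>0. (q' has_vector_derivative A (q' t)) (at t)"
      and inb: "\<forall>t\<ge>0. q t \<in> cball 0 \<rho> \<and> q' t \<in> cball 0 \<rho>" for q q'
  proof (rule ccontr)
    assume neg: "\<not> ?thesis"
    define G where "G t = (v1 \<bullet> (q t - q' t))^2 - (v2 \<bullet> (q t - q' t))^2" for t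
    define G' where "G' t = 2 * (v1 \<bullet> (q t - q' t)) * (v1 \<bullet> (A (q t) - A (q' t))) - 2 * (v2 \<bullet> (q t - q' t)) * (v2 \<bullet> (A (q t) - A (q' t)))" for t
    have G0: "G 0 > 0" using neg by (simp add: G_def)
    have Gc: "continuous_on {0..} G" unfolding G_def[abs_def] using cq cq' by (intro continuous_intros)
    have Gd: "(G has_real_derivative G' t) (at t)" if t: "t > 0" for t
    proof -
      have dD: "((\<lambda>s. q s - q' s) has_vector_derivative A (q t) - A (q' t)) (at t)"
        using dq t dq' by (intro has_vector_derivative_diff) auto
      have "((\<lambda>x. (v1 \<bullet> x)^2 - (v2 \<bullet> x)^2) has_derivative
             (\<lambda>h. 2 * (v1 \<bullet> (q t - q' t)) * (v1 \<bullet> h) - 2 * (v2 \<bullet> (q t - q' t)) * (v2 \<bullet> h))) (at (q t - q' t))"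
        by (auto intro!: derivative_eq_intros simp: power2_eq_square algebra_simps)
      from vec_chain[OF dD this] show ?thesis by (simp add: G_def[abs_def] G'_def)
    qed
    have Gup: "G t \<le> (norm v1)^2 * (2 * \<rho>)^2" if t: "t \<ge> 0" for t
    proof -
      have n: "norm (q t - q' t) \<le> 2 * \<rho>"
      proof -
        have "norm (q t - q' t) \<le> norm (q t) + norm (q' t)" by (rule norm_triangle_ineq4)
        also have "\<dots> \<le> \<rho> + \<rho>" using inb t by auto
        finally show ?thesis by simp
      qed
      have "\<bar>v1 \<bullet> (q t - q' t)\<bar> \<le> norm v1 * norm (q t - q' t)" by (rule Cauchy_Schwarz_ineq2)
      also have "\<dots> \<le> norm v1 * (2 * \<rho>)" using n by (intro mult_left_mono) auto
      finally have "(v1 \<bullet> (q t - q' t))^2 \<le> (norm v1 * (2 * \<rho>))^2"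
        by (metis abs_ge_zero power2_abs power_mono)
      then show ?thesis by (simp add: G_def power_mult_distrib) (smt (verit) zero_le_power2)
    qed
    have Gder_lb: "G' t \<ge> c0 * (v1 \<bullet> (q t - q' t))^2" if t: "t > 0" and Gt: "G t \<ge> 0" for t
    proof -
      define \<Delta> where "\<Delta> = q t - q' t"
      define u1 where "u1 = v1 \<bullet> \<Delta>"
      define u2 where "u2 = v2 \<bullet> \<Delta>"
      define rr where "rr = A (q t) - A (q' t) - K \<Delta>"
      have qb: "q t \<in> ball 0 d" "q' t \<in> ball 0 d" using inb t \<rho>(2) less_imp_le[OF t] by blast+
      have nr: "norm rr \<le> \<epsilon> * norm \<Delta>" using d(3)[OF qb] by (simp add: rr_def \<Delta>_def)
      have Aeq: "A (q t) - A (q' t) = K \<Delta> + rr" by (simp add: rr_def)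
      have Gexp: "G' t = 2*m1*u1^2 - 2*m2*u2^2 + (2*u1*(v1 \<bullet> rr) - 2*u2*(v2 \<bullet> rr))"
        unfolding G'_def \<Delta>_def[symmetric] Aeq by (simp add: inner_add_right ev1 ev2 u1_def u2_def power2_eq_square algebra_simps)
      have u21: "u2^2 \<le> u1^2" using Gt by (simp add: G_def u1_def u2_def \<Delta>_def)
      have main: "2*m1*u1^2 - 2*m2*u2^2 \<ge> 2*c0*u1^2"
      proof (cases "m2 \<le> 0")
        case True
        then have "c0 = m1" by (simp add: c0_def)
        moreover have "m2*u2^2 \<le> 0" using True by (simp add: mult_nonpos_nonneg)
        ultimately show ?thesis by simp
      next
        case False
        then have "c0 = m1 - m2" by (simp add: c0_def)
        then have e: "c0*u1^2 = m1*u1^2 - m2*u1^2" by (simp add: left_diff_distrib)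
        moreover have "m2*u2^2 \<le> m2*u1^2" using False u21 by (intro mult_left_mono) auto
        ultimately show ?thesis by linarith
      qed
      have err: "\<bar>2*u1*(v1 \<bullet> rr) - 2*u2*(v2 \<bullet> rr)\<bar> \<le> c0 * u1^2"
      proof -
        have a1: "\<bar>v1 \<bullet> rr\<bar> \<le> M * norm rr"
          using Cauchy_Schwarz_ineq2[of v1 rr] by (smt (verit) M_def mult_right_mono norm_ge_zero)
        have a2: "\<bar>v2 \<bullet> rr\<bar> \<le> M * norm rr"
          using Cauchy_Schwarz_ineq2[of v2 rr] by (smt (verit) M_def mult_right_mono norm_ge_zero)
        have "\<bar>2*u1*(v1 \<bullet> rr) - 2*u2*(v2 \<bullet> rr)\<bar> \<le> \<bar>2*u1*(v1 \<bullet> rr)\<bar> + \<bar>2*u2*(v2 \<bullet> rr)\<bar>" by (rule abs_triangle_ineq4)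
        also have "\<dots> = 2*\<bar>u1\<bar>*\<bar>v1 \<bullet> rr\<bar> + 2*\<bar>u2\<bar>*\<bar>v2 \<bullet> rr\<bar>" by (simp add: abs_mult)
        also have "\<dots> \<le> 2*\<bar>u1\<bar>*(M * norm rr) + 2*\<bar>u2\<bar>*(M * norm rr)"
          using a1 a2 by (intro add_mono mult_left_mono) auto
        also have "\<dots> = 2 * M * norm rr * (\<bar>u1\<bar> + \<bar>u2\<bar>)" by (simp add: algebra_simps)
        also have "\<dots> \<le> 2 * M * (\<epsilon> * (C * (\<bar>u1\<bar> + \<bar>u2\<bar>))) * (\<bar>u1\<bar> + \<bar>u2\<bar>)"
        proof -
          have "norm rr \<le> \<epsilon> * (C * (\<bar>u1\<bar> + \<bar>u2\<bar>))"
            using nr Cb[of \<Delta>] \<epsilon> by (smt (verit) mult_left_mono u1_def u2_def)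
          then show ?thesis using Mpos by (intro mult_right_mono mult_left_mono) auto
        qed
        also have "\<dots> = (c0/4) * (\<bar>u1\<bar> + \<bar>u2\<bar>)^2" using Mpos C by (simp add: \<epsilon>_def power2_eq_square field_simps)
        also have "\<dots> \<le> (c0/4) * (2 * (u1^2 + u2^2))" using c0 abs_sum_sq by (intro mult_left_mono) auto
        also have "\<dots> \<le> (c0/4) * (2 * (u1^2 + u1^2))" using c0 u21 by (intro mult_left_mono) auto
        also have "\<dots> = c0 * u1^2" by simp
        finally show ?thesis .
      qed
      have "G' t \<ge> 2*c0*u1^2 - c0 * u1^2" using Gexp main err by (simp add: abs_le_iff)
      then show ?thesis by (simp add: u1_def \<Delta>_def)
    qed
    have persist: "G t \<ge> G 0" if "t \<ge> 0" for t
    proof (rule pos_persist[OF Gc Gd _ G0 that])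
      fix s :: real assume s: "s > 0" "G s > 0"
      have "G' s \<ge> c0 * (v1 \<bullet> (q s - q' s))^2" using Gder_lb s by simp
      moreover have "c0 * (v1 \<bullet> (q s - q' s))^2 \<ge> 0" using c0 by simp
      ultimately show "G' s \<ge> 0" by linarith
    qed (auto)
    have growth: "G T \<ge> G 0 + (c0 * G 0) * T" if "T \<ge> 0" for T
    proof (rule lin_growth[OF Gc Gd _ that])
      fix s :: real assume s: "s > 0"
      have Gs: "G s \<ge> G 0" using persist s by simp
      have "G' s \<ge> c0 * (v1 \<bullet> (q s - q' s))^2" using Gder_lb s Gs G0 by simp
      moreover have "(v1 \<bullet> (q s - q' s))^2 \<ge> G s" by (simp add: G_def)
      ultimately show "G' s \<ge> c0 * G 0" using Gs c0 by (smt (verit) mult_left_mono)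
    qed (auto)
    define T where "T = ((norm v1)^2 * (2 * \<rho>)^2 + 1) / (c0 * G 0)"
    have T: "T \<ge> 0" using c0 G0 by (simp add: T_def)
    have "(c0 * G 0) * T = (norm v1)^2 * (2 * \<rho>)^2 + 1" using c0 G0 by (simp add: T_def)
    then have "G T \<ge> G 0 + (norm v1)^2 * (2 * \<rho>)^2 + 1" using growth[OF T] by simp
    then show False using Gup[OF T] G0 by simp
  qed
  show ?thesis using \<rho> d key by blast
qed

end

lemma shift_deriv:
  fixes s t :: real
  assumes "\<And>t. t \<ge> 0 \<Longrightarrow> (\<gamma> has_vector_derivative X (\<gamma> t)) (at t within {0..})" and s: "s \<ge> 0" and t: "t \<ge> 0"
  shows "((\<lambda>t. \<gamma> (s + t)) has_vector_derivative X (\<gamma> (s + t))) (at t within {0..})"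
proof -
  have f: "((\<lambda>t. s + t) has_vector_derivative 1) (at t within {0..})"
    by (auto intro!: derivative_eq_intros)
  have "(\<gamma> has_vector_derivative X (\<gamma> (s + t))) (at (s + t) within {0..})" using assms(1)[of "s + t"] s t by simp
  moreover have "(\<lambda>t. s + t) ` {0..} \<subseteq> {0..}" using s by auto
  ultimately have "(\<gamma> has_vector_derivative X (\<gamma> (s + t))) (at (s + t) within (\<lambda>t. s + t) ` {0..})"
    by (rule has_vector_derivative_within_subset)
  from vector_diff_chain_within[OF f this] show ?thesis by (simp add: o_def)
qed

lemma shift_tendsto:
  fixes s :: real
  assumes "(\<gamma> \<longlongrightarrow> l) at_top"
  shows "((\<lambda>t. \<gamma> (s + t)) \<longlongrightarrow> l) at_top"
proof -
  have "filterlim (\<lambda>t::real. s + t) at_top at_top"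
    by (rule filterlim_tendsto_add_at_top[OF tendsto_const filterlim_ident])
  from filterlim_compose[OF assms this] show ?thesis .
qed

lemma stable_shift:
  fixes s :: real
  assumes g0: "\<forall>t\<ge>0. (\<gamma> has_vector_derivative xiH H (\<gamma> t)) (at t within {0..}) \<and> \<gamma> t \<in> N"
    and lim: "(\<gamma> \<longlongrightarrow> 0) at_top" and s: "s \<ge> 0"
  shows "\<gamma> s \<in> stable_loc H N"
  unfolding stable_loc_def
proof (intro CollectI conjI exI[of _ "\<lambda>t. \<gamma> (s + t)"])
  show "\<gamma> s \<in> N" using g0 s by blast
  show "\<gamma> (s + 0) = \<gamma> s" by simp
  show "\<forall>t\<ge>0. ((\<lambda>t. \<gamma> (s + t)) has_vector_derivative xiH H (\<gamma> (s + t))) (at t within {0..}) \<and> \<gamma> (s + t) \<in> N"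
    using shift_deriv[of \<gamma> "xiH H" s] g0 s by auto
  show "((\<lambda>t. \<gamma> (s + t)) \<longlongrightarrow> 0) at_top" using shift_tendsto[OF lim] .
qed

lemma norm_proj_le: "norm (proj P) \<le> norm P"
proof -
  obtain a b c d where P: "P = (a, b, c, d)" by (metis prod.exhaust)
  have "norm (proj P) = sqrt (a^2 + b^2)" by (simp add: P proj_def norm_Pair)
  also have "\<dots> \<le> sqrt (a^2 + (b^2 + (c^2 + d^2)))" by (intro real_sqrt_le_mono) auto
  also have "\<dots> = norm P" by (simp add: P norm_Pair)
  finally show ?thesis .
qed

lemma proj_linear: "bounded_linear proj"
  unfolding proj_def by (auto intro!: bounded_linear_intros)

lemma proj_diff: "proj P - proj Q = proj (P - Q)"
  by (simp add: proj_def)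

lemma traj_bounded:
  fixes \<gamma> :: "real \<Rightarrow> 'a::real_normed_vector"
  assumes c: "continuous_on {0..} \<gamma>" and lim: "(\<gamma> \<longlongrightarrow> 0) at_top" and e: "e > 0"
  shows "\<exists>n R::nat. (\<forall>t\<ge>0. norm (\<gamma> t) \<le> real R) \<and> (\<forall>t\<ge>real n. norm (\<gamma> t) < e)"
proof -
  have "eventually (\<lambda>t. dist (\<gamma> t) 0 < e) at_top" using lim e tendsto_iff by blast
  then obtain T0 where T0: "\<And>t. t \<ge> T0 \<Longrightarrow> norm (\<gamma> t) < e" unfolding eventually_at_top_linorder by auto
  define n where "n = nat \<lceil>T0\<rceil>"
  have nT: "real n \<ge> T0" by (simp add: n_def) linarith
  have "compact (\<gamma> ` {0..real n})" using c by (intro compact_continuous_image) (auto intro: continuous_on_subset)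
  then obtain B where B: "\<And>t. t \<in> {0..real n} \<Longrightarrow> norm (\<gamma> t) \<le> B"
    using compact_imp_bounded bounded_iff by (metis imageI)
  define R where "R = nat \<lceil>max B e\<rceil>"
  have RB: "real R \<ge> B" "real R \<ge> e" by (simp_all add: R_def) linarith+
  have "norm (\<gamma> t) \<le> real R" if "t \<ge> 0" for t
  proof (cases "t \<le> real n")
    case True then show ?thesis using B[of t] that RB by force
  next
    case False then show ?thesis using T0[of t] nT RB by force
  qed
  moreover have "\<forall>t\<ge>real n. norm (\<gamma> t) < e" using T0 nT by force
  ultimately show ?thesis by blast
qed


context HSz
begin

lemma no_pos_eig:
  assumes v1: "v1 \<noteq> 0" and v2: "v2 \<noteq> 0" and m12: "m2 < m1" and m1: "0 < m1"
    and ev1: "\<And>w. v1 \<bullet> K w = m1 * (v1 \<bullet> w)" and ev2: "\<And>w. v2 \<bullet> K w = m2 * (v2 \<bullet> w)"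
    and C: "C > 0" and Cb: "\<And>w. norm w \<le> C * (\<bar>v1 \<bullet> w\<bar> + \<bar>v2 \<bullet> w\<bar>)"
    and zjet: "\<exists>N. open N \<and> 0 \<in> N \<and> jet z ` U \<inter> N = stable_loc H N"
  shows False
proof -
  obtain N where N: "open N" "0 \<in> N" "jet z ` U \<inter> N = stable_loc H N" using zjet by blast
  obtain \<rho>1 where \<rho>1: "\<rho>1 > 0" "cball 0 \<rho>1 \<subseteq> U"
    and cone1: "\<And>q q'. continuous_on {0..} q \<Longrightarrow> continuous_on {0..} q' \<Longrightarrow>
     (\<forall>t>0. (q has_vector_derivative A (q t)) (at t)) \<Longrightarrow> (\<forall>t>0. (q' has_vector_derivative A (q' t)) (at t)) \<Longrightarrow>
     (\<forall>t\<ge>0. q t \<in> cball 0 \<rho>1 \<and> q' t \<in> cball 0 \<rho>1) \<Longrightarrow> (v1 \<bullet> (q 0 - q' 0))^2 \<le> (v2 \<bullet> (q 0 - q' 0))^2"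
    using cone[OF v1 v2 m12 m1 ev1 ev2 C Cb] by blast
  obtain \<rho>0 where \<rho>0: "\<rho>0 > 0" "\<rho>0 \<le> \<rho>1" "\<And>p. norm p < \<rho>0 \<Longrightarrow> jet z p \<in> N"
  proof -
    have "isCont (jet z) 0" using J_has_deriv[OF U(2)] has_derivative_continuous by blast
    moreover obtain e where e: "e > 0" "ball 0 e \<subseteq> N" using N open_contains_ball by blast
    ultimately obtain d where d: "d > 0" "\<And>p. dist p 0 < d \<Longrightarrow> dist (jet z p) (jet z 0) < e"
      unfolding continuous_at_eps_delta by blast
    have "jet z p \<in> N" if "norm p < min d \<rho>1" for p
      using d(2)[of p] that e(2) J0 by (auto simp: dist_norm)
    then show ?thesis using that[of "min d \<rho>1"] d \<rho>1 by auto
  qed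
  define traj where "traj P \<gamma> \<longleftrightarrow> \<gamma> 0 = P \<and> (\<forall>t\<ge>0. (\<gamma> has_vector_derivative xiH H (\<gamma> t)) (at t within {0..}) \<and> \<gamma> t \<in> N) \<and> (\<gamma> \<longlongrightarrow> 0) at_top" for P \<gamma>
  define \<Gamma> where "\<Gamma> p = (SOME \<gamma>. traj (jet z p) \<gamma>)" for p
  have \<Gamma>: "traj (jet z p) (\<Gamma> p)" if p: "norm p < \<rho>0" for p
  proof -
    have "p \<in> U" using p \<rho>0 \<rho>1 by auto
    then have "jet z p \<in> stable_loc H N" using \<rho>0(3)[OF p] N(3) by blast
    then have "\<exists>\<gamma>. traj (jet z p) \<gamma>" unfolding stable_loc_def traj_def by blast
    then show ?thesis unfolding \<Gamma>_def by (rule someI_ex)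
  qed
  define w where "w p t = proj (\<Gamma> p t)" for p t
  have onJ: "\<Gamma> p t = jet z (w p t) \<and> w p t \<in> U" if p: "norm p < \<rho>0" and t: "t \<ge> 0" for p t
  proof -
    have "\<Gamma> p t \<in> stable_loc H N" using \<Gamma>[OF p] t unfolding traj_def by (intro stable_shift) auto
    then have "\<Gamma> p t \<in> jet z ` U" using N(3) by blast
    then obtain x where x: "x \<in> U" "\<Gamma> p t = jet z x" by blast
    then have "w p t = x" by (simp add: w_def fst_J)
    then show ?thesis using x by simp
  qed
  have \<Gamma>cont: "continuous_on {0..} (\<Gamma> p)" if p: "norm p < \<rho>0" for p
    by (rule cont_from_deriv_within) (use \<Gamma>[OF p] in \<open>auto simp: traj_def\<close>)
  have \<Gamma>der: "(\<Gamma> p has_vector_derivative xiH H (\<Gamma> p t)) (at t)" if p: "norm p < \<rho>0" and t: "t > 0" for p t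
    by (rule deriv_within_ge0_at) (use \<Gamma>[OF p] t in \<open>auto simp: traj_def\<close>)
  have wcont: "continuous_on {0..} (w p)" if p: "norm p < \<rho>0" for p
    unfolding w_def[abs_def] using \<Gamma>cont[OF p] proj_linear
    by (intro continuous_on_compose2[where g=proj and f="\<Gamma> p" and s="{0..}"]) (auto intro: linear_continuous_on)
  have wder: "(w p has_vector_derivative A (w p t)) (at t)" if p: "norm p < \<rho>0" and t: "t > 0" for p t
  proof -
    have "((\<lambda>t. proj (\<Gamma> p t)) has_vector_derivative proj (xiH H (\<Gamma> p t))) (at t)"
      using bounded_linear.has_vector_derivative[OF proj_linear \<Gamma>der[OF p t]] .
    moreover have "proj (xiH H (\<Gamma> p t)) = A (w p t)"
      using onJ[OF p] t by (simp add: proj_xi A_def)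
    ultimately show ?thesis by (simp add: w_def[abs_def])
  qed
  define Gs where "Gs = {x0 \<in> cball 0 \<rho>1. \<exists>q. q 0 = x0 \<and> continuous_on {0..} q \<and> (\<forall>t>0. (q has_vector_derivative A (q t)) (at t)) \<and> (\<forall>t\<ge>0. q t \<in> cball 0 \<rho>1)}"
  have negGs: "negligible Gs"
  proof (rule neg_graph[where v=v2 and L="2*C"])
    fix x y assume x: "x \<in> Gs" and y: "y \<in> Gs"
    obtain q where q: "q 0 = x" "continuous_on {0..} q" "\<forall>t>0. (q has_vector_derivative A (q t)) (at t)" "\<forall>t\<ge>0. q t \<in> cball 0 \<rho>1"
      using x by (auto simp: Gs_def)
    obtain q' where q': "q' 0 = y" "continuous_on {0..} q'" "\<forall>t>0. (q' has_vector_derivative A (q' t)) (at t)" "\<forall>t\<ge>0. q' t \<in> cball 0 \<rho>1"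
      using y by (auto simp: Gs_def)
    have "(v1 \<bullet> (x - y))^2 \<le> (v2 \<bullet> (x - y))^2" using cone1[OF q(2) q'(2) q(3) q'(3)] q(4) q'(4) q(1) q'(1) by auto
    then have "\<bar>v1 \<bullet> (x - y)\<bar> \<le> \<bar>v2 \<bullet> (x - y)\<bar>" using abs_le_square_iff by blast
    then have "norm (x - y) \<le> C * (2 * \<bar>v2 \<bullet> (x - y)\<bar>)" using Cb[of "x - y"] C by (smt (verit) mult_left_mono)
    then show "norm (x - y) \<le> 2 * C * \<bar>v2 \<bullet> x - v2 \<bullet> y\<bar>" by (simp add: inner_diff_right algebra_simps)
  qed
  obtain LJ where LJ: "\<And>x y. x \<in> cball 0 \<rho>1 \<Longrightarrow> y \<in> cball 0 \<rho>1 \<Longrightarrow> norm (jet z x - jet z y) \<le> LJ * norm (x - y)"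
    using lipschitz_on_cball[OF U(1) \<rho>1(2) J_differentiable cont_J_partials] by blast
  have Lxi: "\<exists>Lx\<ge>0. \<forall>x\<in>cball 0 R. \<forall>y\<in>cball 0 R. norm (xiH H x - xiH H y) \<le> Lx * norm (x - y)" for R :: real
  proof -
    obtain B where B: "\<forall>x\<in>cball 0 R. \<forall>y\<in>cball 0 R. norm (xiH H x - xiH H y) \<le> B * norm (x - y)"
      using lipschitz_on_cball[OF open_UNIV subset_UNIV xi_differentiable cont_xi_partials] by blast
    then have "\<forall>x\<in>cball 0 R. \<forall>y\<in>cball 0 R. norm (xiH H x - xiH H y) \<le> max B 0 * norm (x - y)"
      by (meson max.cobounded1 mult_right_mono norm_ge_zero order_trans)
    then show ?thesis by (intro exI[of _ "max B 0"]) auto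
  qed
  define E where "E nR = {p. norm p < \<rho>0 \<and> (\<forall>t\<ge>0. norm (\<Gamma> p t) \<le> real (snd nR)) \<and> (\<forall>t\<ge>real (fst nR). w p t \<in> cball 0 \<rho>1)}" for nR :: "nat \<times> nat"
  have negE: "negligible (E nR)" for nR
  proof -
    obtain n R where nR: "nR = (n, R)" by fastforce
    obtain Lx where Lx: "Lx \<ge> 0" "\<And>x y. x\<in>cball 0 (real R) \<Longrightarrow> y\<in>cball 0 (real R) \<Longrightarrow> norm (xiH H x - xiH H y) \<le> Lx * norm (x - y)"
      using Lxi[of "real R"] by blast
    show ?thesis
    proof (rule neg_inv_lip[where \<Phi>="\<lambda>p. w p (real n)" and L="exp (Lx * real n) * LJ"])
      have "(\<lambda>p. w p (real n)) ` E nR \<subseteq> Gs"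
      proof
        fix y assume "y \<in> (\<lambda>p. w p (real n)) ` E nR"
        then obtain p where p: "p \<in> E nR" "y = w p (real n)" by blast
        have pn: "norm p < \<rho>0" "\<forall>t\<ge>real n. w p t \<in> cball 0 \<rho>1" using p(1) by (auto simp: E_def nR)
        show "y \<in> Gs" unfolding Gs_def
        proof (intro CollectI conjI exI[of _ "\<lambda>t. w p (real n + t)"])
          show "y \<in> cball 0 \<rho>1" using pn p by auto
          show "w p (real n + 0) = y" using p by simp
          show "continuous_on {0..} (\<lambda>t. w p (real n + t))"
          proof (rule continuous_on_compose2[OF wcont[OF pn(1)]])
            show "continuous_on {0..} (\<lambda>t. real n + t)" by (intro continuous_intros)
          qed auto
          show "\<forall>t>0. ((\<lambda>t. w p (real n + t)) has_vector_derivative A (w p (real n + t))) (at t)"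
          proof (intro allI impI)
            fix t :: real assume t: "t > 0"
            have "(w p has_vector_derivative A (w p (real n + t))) (at (real n + t))" using wder[OF pn(1)] t by simp
            then have "(w p has_vector_derivative A (w p (real n + t))) (at (real n + t) within (\<lambda>t. real n + t) ` UNIV)"
              by (rule has_vector_derivative_at_within)
            moreover have "((\<lambda>t. real n + t) has_vector_derivative 1) (at t)" by (auto intro!: derivative_eq_intros)
            ultimately show "((\<lambda>t. w p (real n + t)) has_vector_derivative A (w p (real n + t))) (at t)"
              using vector_diff_chain_within[of "\<lambda>t. real n + t" 1 t UNIV "w p"] by (simp add: o_def)
          qed
          show "\<forall>t\<ge>0. w p (real n + t) \<in> cball 0 \<rho>1" using pn(2) by auto
        qed
      qed
      then show "negligible ((\<lambda>p. w p (real n)) ` E nR)" using negGs negligible_subset by blast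
    next
      fix p p' assume p: "p \<in> E nR" and p': "p' \<in> E nR"
      have pp: "norm p < \<rho>0" "\<forall>t\<ge>0. norm (\<Gamma> p t) \<le> real R" "\<forall>t\<ge>real n. w p t \<in> cball 0 \<rho>1" using p by (auto simp: E_def nR)
      have pp': "norm p' < \<rho>0" "\<forall>t\<ge>0. norm (\<Gamma> p' t) \<le> real R" "\<forall>t\<ge>real n. w p' t \<in> cball 0 \<rho>1" using p' by (auto simp: E_def nR)
      have "norm (p - p') = norm (proj (\<Gamma> p 0) - proj (\<Gamma> p' 0))"
        using \<Gamma>[OF pp(1)] \<Gamma>[OF pp'(1)] by (simp add: traj_def fst_J)
      also have "\<dots> \<le> norm (\<Gamma> p 0 - \<Gamma> p' 0)" unfolding proj_diff by (rule norm_proj_le)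
      also have "\<dots> \<le> exp (Lx * real n) * norm (\<Gamma> p (real n) - \<Gamma> p' (real n))"
      proof (rule gronwall_dist[OF \<Gamma>cont[OF pp(1)] \<Gamma>cont[OF pp'(1)] \<Gamma>der[OF pp(1)] \<Gamma>der[OF pp'(1)] _ Lx(1)])
        fix t :: real assume "0 \<le> t" "t \<le> real n"
        then show "norm (xiH H (\<Gamma> p t) - xiH H (\<Gamma> p' t)) \<le> Lx * norm (\<Gamma> p t - \<Gamma> p' t)"
          using Lx(2) pp(2) pp'(2) by auto
      qed auto
      also have "\<dots> \<le> exp (Lx * real n) * (LJ * norm (w p (real n) - w p' (real n)))"
      proof -
        have "\<Gamma> p (real n) = jet z (w p (real n))" "\<Gamma> p' (real n) = jet z (w p' (real n))"
          using onJ[OF pp(1)] onJ[OF pp'(1)] by auto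
        then show ?thesis using LJ[of "w p (real n)" "w p' (real n)"] pp(3) pp'(3) by simp
      qed
      finally show "norm (p - p') \<le> exp (Lx * real n) * LJ * norm (w p (real n) - w p' (real n))" by (simp add: mult.assoc)
    qed
  qed
  have cover: "ball 0 \<rho>0 \<subseteq> \<Union> (range E)"
  proof
    fix p :: R2 assume "p \<in> ball 0 \<rho>0"
    then have p: "norm p < \<rho>0" by simp
    have lim: "(\<Gamma> p \<longlongrightarrow> 0) at_top" using \<Gamma>[OF p] by (simp add: traj_def)
    obtain n R :: nat where nR: "\<forall>t\<ge>0. norm (\<Gamma> p t) \<le> real R" "\<forall>t\<ge>real n. norm (\<Gamma> p t) < \<rho>1"
      using traj_bounded[OF \<Gamma>cont[OF p] lim \<rho>1(1)] by blast
    have "\<forall>t\<ge>real n. w p t \<in> cball 0 \<rho>1"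
      using nR(2) norm_proj_le by (smt (verit) mem_cball_0 w_def)
    then have "p \<in> E (n, R)" using p nR(1) by (simp add: E_def)
    then show "p \<in> \<Union> (range E)" by blast
  qed
  have "negligible (\<Union> (range E))" by (rule negligible_countable_Union) (auto intro: negE)
  then have "negligible (ball (0::R2) \<rho>0)" using cover negligible_subset by blast
  moreover have "ball (0::R2) \<rho>0 \<noteq> {}" using \<rho>0 by simp
  ultimately show False using open_not_negligible[of "ball (0::R2) \<rho>0"] by simp
qed

end

lemma main_stable:
  fixes H :: "R4 \<Rightarrow> real" and a b :: real and e1 e2 e3 e4 :: R4
    and z zt :: "R2 \<Rightarrow> real" and U Ut :: "R2 set"
  assumes H2: "Ck_on 2 UNIV H" and crit0: "\<And>v. pd H v 0 = 0"
    and ab: "a > 0" "b > 0" "a \<noteq> b"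
    and eig: "e1 \<noteq> 0" "e2 \<noteq> 0" "e3 \<noteq> 0" "e4 \<noteq> 0"
      "frechet_derivative (xiH H) (at 0) e1 = a *\<^sub>R e1"
      "frechet_derivative (xiH H) (at 0) e2 = b *\<^sub>R e2"
      "frechet_derivative (xiH H) (at 0) e3 = (- a) *\<^sub>R e3"
      "frechet_derivative (xiH H) (at 0) e4 = (- b) *\<^sub>R e4"
    and U: "open U" "0 \<in> U"
    and z_C2: "Ck_on 2 U z"
    and z_sol: "solves_HJ H U z"
    and z0: "z 0 = 0" "pd z ex2 0 = 0" "pd z ey2 0 = 0"
    and z_jet: "\<exists>N. open N \<and> 0 \<in> N \<and> jet z ` U \<inter> N = stable_loc H N"
    and Ut: "open Ut" "0 \<in> Ut"
    and zt_C2: "Ck_on 2 Ut zt"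
    and zt_sol: "solves_HJ H Ut zt"
    and zt0: "zt 0 = 0" "pd zt ex2 0 = 0" "pd zt ey2 0 = 0"
    and tangent: "pd2 zt ex2 ex2 0 = pd2 z ex2 ex2 0"
      "pd2 zt ex2 ey2 0 = pd2 z ex2 ey2 0"
      "pd2 zt ey2 ey2 0 = pd2 z ey2 ey2 0"
  shows "\<exists>W. open W \<and> 0 \<in> W \<and> W \<subseteq> U \<inter> Ut \<and> (\<forall>w\<in>W. zt w = z w)"
proof -
  interpret z: HSz H z U using H2 crit0 U z_C2 z_sol z0 by unfold_locales auto
  interpret t: HSz H zt Ut using H2 crit0 Ut zt_C2 zt_sol zt0 by unfold_locales auto
  have pd2Z: "pd2 f u v 0 = frechet_derivative (pd f v) (at 0) u" for f u v by (simp add: pd2_def pd_eta)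
  have tz1: "t.Z ex2 0 ex2 = z.Z ex2 0 ex2" using tangent(1) by (simp add: pd2Z t.Z_def z.Z_def)
  have tz2: "t.Z ey2 0 ex2 = z.Z ey2 0 ex2" using tangent(2) by (simp add: pd2Z t.Z_def z.Z_def)
  have tz3: "t.Z ey2 0 ey2 = z.Z ey2 0 ey2" using tangent(3) by (simp add: pd2Z t.Z_def z.Z_def)
  have tz4: "t.Z ex2 0 ey2 = z.Z ex2 0 ey2" using tz2 t.schwarz0 z.schwarz0 by simp
  have tanx: "t.Z ex2 0 = z.Z ex2 0"
  proof
    fix v :: R2
    obtain p q where v: "v = (p, q)" by fastforce
    show "t.Z ex2 0 v = z.Z ex2 0 v"
      unfolding v lin2[OF t.Z_linear[OF t.basis2(1) t.U(2)]] lin2[OF z.Z_linear[OF z.basis2(1) z.U(2)]] tz1 tz4 ..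
  qed
  have tany: "t.Z ey2 0 = z.Z ey2 0"
  proof
    fix v :: R2
    obtain p q where v: "v = (p, q)" by fastforce
    show "t.Z ey2 0 v = z.Z ey2 0 v"
      unfolding v lin2[OF t.Z_linear[OF t.basis2(2) t.U(2)]] lin2[OF z.Z_linear[OF z.basis2(2) z.U(2)]] tz2 tz3 ..
  qed
  interpret zt: HS2 H z U zt Ut using tanx tany z0 zt0 by unfold_locales auto
  interpret tz: HS2 H zt Ut z U using tanx tany z0 zt0 by unfold_locales auto
  have Le: "z.L e1 = a *\<^sub>R e1" "z.L e2 = b *\<^sub>R e2" "z.L e3 = (-a) *\<^sub>R e3" "z.L e4 = (-b) *\<^sub>R e4"
    using eig by (simp_all add: z.L_def)
  have dist: "a \<noteq> b" "a \<noteq> -a" "a \<noteq> -b" "b \<noteq> -a" "b \<noteq> -b" "-a \<noteq> -b" using ab by auto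
  have nz: "a \<noteq> 0" "b \<noteq> 0" "-a \<noteq> 0" "-b \<noteq> 0" using ab by auto
  obtain v1 v2 m1 m2 C where sp: "v1 \<noteq> 0" "v2 \<noteq> 0" "m2 < m1" "m1 \<noteq> 0" "m2 \<noteq> 0"
     "\<And>w. v1 \<bullet> z.K w = m1 * (v1 \<bullet> w)" "\<And>w. v2 \<bullet> z.K w = m2 * (v2 \<bullet> w)"
     "C > 0" "\<And>w. norm w \<le> C * (\<bar>v1 \<bullet> w\<bar> + \<bar>v2 \<bullet> w\<bar>)"
    using z.K_spectral[OF eig(1-4) Le dist nz] by blast
  have m1neg: "m1 < 0"
  proof (rule ccontr)
    assume "\<not> m1 < 0"
    then have "0 < m1" using sp(4) by simp
    then show False using z.no_pos_eig[OF sp(1,2,3) _ sp(6,7,8,9) z_jet] by blast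
  qed
  have m2neg: "m2 < 0" using m1neg sp(3) by simp
  define V where "V w = (v1 \<bullet> w)^2 + (v2 \<bullet> w)^2" for w
  obtain r1 where r1: "r1 > 0" "\<And>w. V w \<le> r1 \<Longrightarrow> w \<in> zt.U0 \<and> zt w \<le> z w"
    using zt.uniq_half[OF sp(1,2) m1neg m2neg sp(6,7,8,9)] unfolding V_def by blast
  have evt1: "v1 \<bullet> t.K w = m1 * (v1 \<bullet> w)" and evt2: "v2 \<bullet> t.K w = m2 * (v2 \<bullet> w)" for w
    using sp(6,7) zt.K_eq' by simp_all
  obtain r2 where r2: "r2 > 0" "\<And>w. V w \<le> r2 \<Longrightarrow> w \<in> tz.U0 \<and> z w \<le> zt w"
    using tz.uniq_half[OF sp(1,2) m1neg m2neg evt1 evt2 sp(8,9)] unfolding V_def by blast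
  define W where "W = {w. V w < min r1 r2}"
  have "open W"
  proof -
    have "continuous_on UNIV V" unfolding V_def[abs_def] by (intro continuous_intros)
    then show ?thesis unfolding W_def using open_Collect_less[of V "\<lambda>_. min r1 r2"] by auto
  qed
  moreover have "0 \<in> W" using r1 r2 by (simp add: W_def V_def)
  moreover have "W \<subseteq> U \<inter> Ut" using r1(2) by (auto simp: W_def zt.U0_def)
  moreover have "\<forall>w\<in>W. zt w = z w"
  proof
    fix w assume "w \<in> W"
    then have "V w \<le> r1" "V w \<le> r2" by (auto simp: W_def)
    then show "zt w = z w" using r1(2)[of w] r2(2)[of w] by simp
  qed
  ultimately show ?thesis by blast
qed

lemma fd_uminus:
  assumes "f differentiable (at x)"
  shows "frechet_derivative (\<lambda>x. - f x) (at x) = (\<lambda>v. - frechet_derivative f (at x) v)"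
proof -
  have "((\<lambda>x. - f x) has_derivative (\<lambda>v. - frechet_derivative f (at x) v)) (at x)"
    using assms frechet_derivative_works has_derivative_minus by blast
  then show ?thesis using frechet_derivative_at by metis
qed

lemma Ck_uminus: "Ck_on k UNIV f \<Longrightarrow> Ck_on k UNIV (\<lambda>x. - f x)"
  for f :: "'a::euclidean_space \<Rightarrow> real"
proof (induction k arbitrary: f)
  case 0
  then show ?case by (auto intro: continuous_intros)
next
  case (Suc k)
  have df: "f differentiable (at x)" for x
    using Suc.prems differentiable_on_eq_differentiable_at[OF open_UNIV] by auto
  have "(\<lambda>x. - f x) differentiable_on UNIV"
    using Suc.prems by (auto intro: differentiable_on_minus)
  moreover have "Ck_on k UNIV (\<lambda>x. frechet_derivative (\<lambda>x. - f x) (at x) i)" if i: "i \<in> Basis" for i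
  proof -
    have "Ck_on k UNIV (\<lambda>x. frechet_derivative f (at x) i)" using Suc.prems i by simp
    then have "Ck_on k UNIV (\<lambda>x. - frechet_derivative f (at x) i)" by (rule Suc.IH)
    moreover have "(\<lambda>x. frechet_derivative (\<lambda>x. - f x) (at x) i) = (\<lambda>x. - frechet_derivative f (at x) i)"
      using fd_uminus[OF df] by auto
    ultimately show ?thesis by simp
  qed
  ultimately show ?case by simp
qed

context HS
begin

lemma pd_neg: "pd (\<lambda>x. - H x) v P = - pd H v P"
  by (simp add: pd_def fd_uminus[OF dH])

lemma xi_neg: "xiH (\<lambda>x. - H x) = (\<lambda>P. - xiH H P)"
  by (rule ext) (simp add: xiH_def pd_neg)

lemma L_neg: "frechet_derivative (xiH (\<lambda>x. - H x)) (at 0) v = - frechet_derivative (xiH H) (at 0) v"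
proof -
  have "((\<lambda>P. - xiH H P) has_derivative (\<lambda>v. - frechet_derivative (xiH H) (at 0) v)) (at 0)"
    using xi_differentiable frechet_derivative_works has_derivative_minus by blast
  then have "frechet_derivative (\<lambda>P. - xiH H P) (at 0) = (\<lambda>v. - frechet_derivative (xiH H) (at 0) v)"
    using frechet_derivative_at by metis
  then show ?thesis by (simp add: xi_neg)
qed

lemma unstable_eq: "unstable_loc H N = stable_loc (\<lambda>x. - H x) N"
proof
  show "unstable_loc H N \<subseteq> stable_loc (\<lambda>x. - H x) N"
  proof
    fix P assume "P \<in> unstable_loc H N"
    then obtain \<gamma> where g: "P \<in> N" "\<gamma> 0 = P" "\<forall>t\<le>0. (\<gamma> has_vector_derivative xiH H (\<gamma> t)) (at t within {..0}) \<and> \<gamma> t \<in> N"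
      "(\<gamma> \<longlongrightarrow> 0) at_bot" unfolding unstable_loc_def by blast
    show "P \<in> stable_loc (\<lambda>x. - H x) N" unfolding stable_loc_def
    proof (intro CollectI conjI exI[of _ "\<lambda>t. \<gamma> (- t)"])
      show "P \<in> N" "\<gamma> (- 0) = P" using g by auto
      show "\<forall>t\<ge>0. ((\<lambda>t. \<gamma> (- t)) has_vector_derivative xiH (\<lambda>x. - H x) (\<gamma> (- t))) (at t within {0..}) \<and> \<gamma> (- t) \<in> N"
      proof (intro allI impI conjI)
        fix t :: real assume t: "t \<ge> 0"
        have f: "(uminus has_vector_derivative -1) (at t within {0..})" by (auto intro!: derivative_eq_intros)
        have "uminus ` {0..} = {..0::real}" by (auto simp: image_iff)
        then have "(\<gamma> has_vector_derivative xiH H (\<gamma> (-t))) (at (- t) within uminus ` {0..})"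
          using g(3) t by simp
        from vector_diff_chain_within[OF f this]
        show "((\<lambda>t. \<gamma> (- t)) has_vector_derivative xiH (\<lambda>x. - H x) (\<gamma> (- t))) (at t within {0..})"
          by (simp add: o_def xi_neg)
        show "\<gamma> (- t) \<in> N" using g(3) t by simp
      qed
      show "((\<lambda>t. \<gamma> (- t)) \<longlongrightarrow> 0) at_top"
        using filterlim_compose[OF g(4) filterlim_uminus_at_bot_at_top] .
    qed
  qed
  show "stable_loc (\<lambda>x. - H x) N \<subseteq> unstable_loc H N"
  proof
    fix P assume "P \<in> stable_loc (\<lambda>x. - H x) N"
    then obtain \<gamma> where g: "P \<in> N" "\<gamma> 0 = P" "\<forall>t\<ge>0. (\<gamma> has_vector_derivative xiH (\<lambda>x. - H x) (\<gamma> t)) (at t within {0..}) \<and> \<gamma> t \<in> N"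
      "(\<gamma> \<longlongrightarrow> 0) at_top" unfolding stable_loc_def by blast
    show "P \<in> unstable_loc H N" unfolding unstable_loc_def
    proof (intro CollectI conjI exI[of _ "\<lambda>t. \<gamma> (- t)"])
      show "P \<in> N" "\<gamma> (- 0) = P" using g by auto
      show "\<forall>t\<le>0. ((\<lambda>t. \<gamma> (- t)) has_vector_derivative xiH H (\<gamma> (- t))) (at t within {..0}) \<and> \<gamma> (- t) \<in> N"
      proof (intro allI impI conjI)
        fix t :: real assume t: "t \<le> 0"
        have f: "(uminus has_vector_derivative -1) (at t within {..0})" by (auto intro!: derivative_eq_intros)
        have "uminus ` {..0} = {0::real..}" by (auto simp: image_iff)
        then have "(\<gamma> has_vector_derivative xiH (\<lambda>x. - H x) (\<gamma> (-t))) (at (- t) within uminus ` {..0})"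
          using g(3) t by simp
        from vector_diff_chain_within[OF f this]
        show "((\<lambda>t. \<gamma> (- t)) has_vector_derivative xiH H (\<gamma> (- t))) (at t within {..0})"
          by (simp add: o_def xi_neg)
        show "\<gamma> (- t) \<in> N" using g(3) t by simp
      qed
      show "((\<lambda>t. \<gamma> (- t)) \<longlongrightarrow> 0) at_bot"
        using filterlim_compose[OF g(4) filterlim_uminus_at_top_at_bot] .
    qed
  qed
qed

end

theorem theorem3p4:
  fixes H :: "R4 \<Rightarrow> real" and a b :: real and e1 e2 e3 e4 :: R4
    and z zt :: "R2 \<Rightarrow> real" and U Ut :: "R2 set"
  assumes H_smooth: "smooth_on UNIV H"
    and H0: "H 0 = 0"
    and crit: "nondeg_critical_0 H"
    and ab: "a > 0" "b > 0"
    and eig: "e1 \<noteq> 0" "e2 \<noteq> 0" "e3 \<noteq> 0" "e4 \<noteq> 0"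
      "frechet_derivative (xiH H) (at 0) e1 = a *\<^sub>R e1"
      "frechet_derivative (xiH H) (at 0) e2 = b *\<^sub>R e2"
      "frechet_derivative (xiH H) (at 0) e3 = (- a) *\<^sub>R e3"
      "frechet_derivative (xiH H) (at 0) e4 = (- b) *\<^sub>R e4"
    and Qind: "Q_indep a b"
    and proj_indep: "lin_indep2 (proj e1) (proj e2)" "lin_indep2 (proj e3) (proj e4)"
      "lin_indep2 (proj e1) (proj e4)" "lin_indep2 (proj e2) (proj e3)"
    and U: "open U" "0 \<in> U"
    and z_C2: "Ck_on 2 U z"
    and z_sol: "solves_HJ H U z"
    and z0: "z 0 = 0" "pd z ex2 0 = 0" "pd z ey2 0 = 0"
    and z_jet: "\<exists>N. open N \<and> 0 \<in> N \<and>
        (jet z ` U \<inter> N = stable_loc H N \<or> jet z ` U \<inter> N = unstable_loc H N)"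
    and Ut: "open Ut" "0 \<in> Ut"
    and zt_C2: "Ck_on 2 Ut zt"
    and zt_sol: "solves_HJ H Ut zt"
    and zt0: "zt 0 = 0" "pd zt ex2 0 = 0" "pd zt ey2 0 = 0"
    and tangent: "pd2 zt ex2 ex2 0 = pd2 z ex2 ex2 0"
      "pd2 zt ex2 ey2 0 = pd2 z ex2 ey2 0"
      "pd2 zt ey2 ey2 0 = pd2 z ey2 ey2 0"
  shows "\<exists>W. open W \<and> 0 \<in> W \<and> W \<subseteq> U \<inter> Ut \<and> (\<forall>w\<in>W. zt w = z w)"
proof -
  have H2: "Ck_on 2 UNIV H" using H_smooth by (simp add: smooth_on_def)
  have crit0: "\<And>v. pd H v 0 = 0" using crit unfolding nondeg_critical_0_def by blast
  have ab_ne: "a \<noteq> b"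
  proof
    assume "a = b"
    then have "1 * a + (-1) * b = 0" by simp
    moreover have "(1::real) \<in> \<rat>" "(-1::real) \<in> \<rat>" by simp_all
    ultimately have "(1::real) = 0 \<and> (-1::real) = 0" using Qind[unfolded Q_indep_def, rule_format, of 1 "-1"] by blast
    then show False by simp
  qed
  interpret HS H using H2 crit0 by unfold_locales
  obtain N where N: "open N" "0 \<in> N" "jet z ` U \<inter> N = stable_loc H N \<or> jet z ` U \<inter> N = unstable_loc H N"
    using z_jet by blast
  show ?thesis
  proof (cases "jet z ` U \<inter> N = stable_loc H N")
    case True
    then have zj: "\<exists>N. open N \<and> 0 \<in> N \<and> jet z ` U \<inter> N = stable_loc H N" using N by blast
    show ?thesis by (rule main_stable[OF H2 crit0 ab(1) ab(2) ab_ne eig U z_C2 z_sol z0 zj Ut zt_C2 zt_sol zt0 tangent])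
  next
    case False
    then have "jet z ` U \<inter> N = unstable_loc H N" using N(3) by blast
    then have "jet z ` U \<inter> N = stable_loc (\<lambda>x. - H x) N" by (simp only: unstable_eq)
    then have zj: "\<exists>N. open N \<and> 0 \<in> N \<and> jet z ` U \<inter> N = stable_loc (\<lambda>x. - H x) N" using N by blast
    have H2': "Ck_on 2 UNIV (\<lambda>x. - H x)" by (rule Ck_uminus[OF H2])
    have crit0': "\<And>v. pd (\<lambda>x. - H x) v 0 = 0" by (simp add: pd_neg crit0)
    have eig': "frechet_derivative (xiH (\<lambda>x. - H x)) (at 0) e3 = a *\<^sub>R e3"
      "frechet_derivative (xiH (\<lambda>x. - H x)) (at 0) e4 = b *\<^sub>R e4"
      "frechet_derivative (xiH (\<lambda>x. - H x)) (at 0) e1 = (- a) *\<^sub>R e1"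
      "frechet_derivative (xiH (\<lambda>x. - H x)) (at 0) e2 = (- b) *\<^sub>R e2"
      unfolding L_neg eig(5-8) by simp_all
    have zs': "solves_HJ (\<lambda>x. - H x) U z" using z_sol by (simp add: solves_HJ_def)
    have zts': "solves_HJ (\<lambda>x. - H x) Ut zt" using zt_sol by (simp add: solves_HJ_def)
    show ?thesis
      by (rule main_stable[OF H2' crit0' ab(1) ab(2) ab_ne eig(3) eig(4) eig(1) eig(2) eig' U z_C2 zs' z0 zj Ut zt_C2 zts' zt0 tangent])
  qed
qed

end
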